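(* Let $H$ be a separable infinite-dimensional complex Hilbert space. Let $x_1,\dots,x_n,y_1,\dots,y_n\in H$ be vectors of norm $1$, let $R>1$, let $T\in L(H)$ with $\|T\|\le R$, let $x\in H\setminus\{0\}$, $z\in H$ and $\epsilon>0$. Then there exist a finite rank operator $S\in L(H)$ with $\|S\|\le R$ and a natural number $N$ depending only on $R,\epsilon,\|x\|,\|z\|$ such that $|\langle (S-T)x_j,y_j\rangle|<\epsilon$ and $\langle z-S^Nx,y_j\rangle=0$ for every $j=1,\dots,n$, and $\|S^{l+1}x\|=R\|S^lx\|$ for every integer $0\le l<N$.
   Context: $L(H)$ denotes the bounded linear operators on $H$; $\langle\cdot,\cdot\rangle$ is the inner product of $H$. *)

theory Defs
  imports "HOL-Analysis.Analysis"
begin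

class complex_vector = real_vector +
  fixes scaleC :: "complex \<Rightarrow> 'a \<Rightarrow> 'a" (infixr \<open>*\<^sub>C\<close> 75)
  assumes scaleC_add_right: "scaleC a (x + y) = scaleC a x + scaleC a y"
    and scaleC_add_left: "scaleC (a + b) x = scaleC a x + scaleC b x"
    and scaleC_scaleC: "scaleC a (scaleC b x) = scaleC (a * b) x"
    and scaleC_one: "scaleC 1 x = x"
    and scaleR_scaleC: "scaleR r x = scaleC (complex_of_real r) x"

text \<open>Complex inner product spaces: a complex vector space with a sesquilinear,
conjugate-symmetric form whose real part is the underlying real inner product
(hence it is positive definite and induces the norm).\<close>

class complex_inner = real_inner + complex_vector +
  fixes cinner :: "'a \<Rightarrow> 'a \<Rightarrow> complex"
  assumes cinner_conj: "cinner x y = cnj (cinner y x)"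
    and cinner_add_left: "cinner (x + y) z = cinner x z + cinner y z"
    and cinner_scaleC_left: "cinner (scaleC c x) y = c * cinner x y"
    and inner_Re_cinner: "inner x y = Re (cinner x y)"

definition cspan :: "'a::complex_vector set \<Rightarrow> 'a set" where
  "cspan B = {v. \<exists>A c. finite A \<and> A \<subseteq> B \<and> v = (\<Sum>a\<in>A. c a *\<^sub>C a)}"

definition clinear :: "('a::complex_vector \<Rightarrow> 'b::complex_vector) \<Rightarrow> bool" where
  "clinear f \<longleftrightarrow> (\<forall>x y. f (x + y) = f x + f y) \<and> (\<forall>c x. f (c *\<^sub>C x) = c *\<^sub>C f x)"

definition finite_rank :: "('a::complex_vector \<Rightarrow> 'b::complex_vector) \<Rightarrow> bool" where
  "finite_rank f \<longleftrightarrow> (\<exists>B. finite B \<and> range f \<subseteq> cspan B)"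

end

theory Submission
  imports Defs
begin


section \<open>Basic complex vector algebra\<close>

declare scaleC_one[simp]

lemma scaleC_zero_right[simp]: "c *\<^sub>C (0::'a::complex_vector) = 0"
proof -
  have "c *\<^sub>C (0::'a) = c *\<^sub>C 0 + c *\<^sub>C 0" by (metis add_0 scaleC_add_right)
  thus ?thesis by simp
qed

lemma scaleC_zero_left[simp]: "0 *\<^sub>C (x::'a::complex_vector) = 0"
proof -
  have "0 *\<^sub>C x = 0 *\<^sub>C x + 0 *\<^sub>C x" by (metis add_0 scaleC_add_left)
  thus ?thesis by simp
qed

lemma scaleC_minus_right: "c *\<^sub>C (- x::'a::complex_vector) = - (c *\<^sub>C x)"
  by (metis add.right_inverse add_eq_0_iff scaleC_add_right scaleC_zero_right)

lemma scaleC_diff_right: "c *\<^sub>C (x - y::'a::complex_vector) = c *\<^sub>C x - c *\<^sub>C y"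
  by (metis diff_conv_add_uminus scaleC_add_right scaleC_minus_right)

lemma scaleC_minus_left: "(- c) *\<^sub>C (x::'a::complex_vector) = - (c *\<^sub>C x)"
  by (metis add.right_inverse add_eq_0_iff scaleC_add_left scaleC_zero_left)

lemma scaleC_diff_left: "(c - d) *\<^sub>C (x::'a::complex_vector) = c *\<^sub>C x - d *\<^sub>C x"
  by (metis diff_conv_add_uminus scaleC_add_left scaleC_minus_left)

lemma scaleC_sum_right: "c *\<^sub>C (\<Sum>i\<in>I. f i) = (\<Sum>i\<in>I. c *\<^sub>C (f i::'a::complex_vector))"
  by (induction I rule: infinite_finite_induct) (auto simp: scaleC_add_right)

lemma scaleC_sum_left: "(\<Sum>i\<in>I. f i) *\<^sub>C (x::'a::complex_vector) = (\<Sum>i\<in>I. f i *\<^sub>C x)"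
  by (induction I rule: infinite_finite_induct) (auto simp: scaleC_add_left)

lemma scaleC_of_real: "complex_of_real r *\<^sub>C (x::'a::complex_vector) = r *\<^sub>R x"
  by (simp add: scaleR_scaleC)

lemma scaleC_commute: "a *\<^sub>C b *\<^sub>C (x::'a::complex_vector) = b *\<^sub>C a *\<^sub>C x"
  by (simp add: scaleC_scaleC mult.commute)

lemma scaleR_scaleC_commute: "r *\<^sub>R (c *\<^sub>C (x::'a::complex_vector)) = c *\<^sub>C (r *\<^sub>R x)"
  by (simp add: scaleR_scaleC scaleC_commute)

section \<open>Complex inner product\<close>

lemma cinner_add_right: "cinner (x::'a::complex_inner) (y + z) = cinner x y + cinner x z"
proof -
  have "cinner x (y+z) = cnj (cinner (y+z) x)" by (rule cinner_conj)
  also have "\<dots> = cnj (cinner y x) + cnj (cinner z x)" by (simp add: cinner_add_left)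
  also have "\<dots> = cinner x y + cinner x z"
    by (simp only: cinner_conj[of x y, symmetric] cinner_conj[of x z, symmetric])
  finally show ?thesis .
qed

lemma cinner_scaleC_right: "cinner (x::'a::complex_inner) (c *\<^sub>C y) = cnj c * cinner x y"
proof -
  have "cinner x (c *\<^sub>C y) = cnj (cinner (c *\<^sub>C y) x)" by (rule cinner_conj)
  also have "\<dots> = cnj c * cnj (cinner y x)" by (simp only: cinner_scaleC_left complex_cnj_mult)
  also have "\<dots> = cnj c * cinner x y" by (simp only: cinner_conj[of x y, symmetric])
  finally show ?thesis .
qed

lemma cinner_zero_left[simp]: "cinner 0 (x::'a::complex_inner) = 0"
  using cinner_scaleC_left[of 0 x x] by simp

lemma cinner_zero_right[simp]: "cinner (x::'a::complex_inner) 0 = 0"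
proof -
  have "cinner x 0 = cnj (cinner 0 x)" by (rule cinner_conj)
  thus ?thesis by (simp only: cinner_zero_left complex_cnj_zero)
qed

lemma cinner_minus_left: "cinner (- x::'a::complex_inner) y = - cinner x y"
  using cinner_add_left[of "-x" x y] by (simp add: eq_neg_iff_add_eq_0)

lemma cinner_minus_right: "cinner (x::'a::complex_inner) (- y) = - cinner x y"
proof -
  have "cinner x (- y) = cnj (cinner (- y) x)" by (rule cinner_conj)
  also have "\<dots> = - cnj (cinner y x)" by (simp only: cinner_minus_left complex_cnj_minus)
  also have "\<dots> = - cinner x y" by (simp only: cinner_conj[of x y, symmetric])
  finally show ?thesis .
qed

lemma cinner_diff_left: "cinner (x - y::'a::complex_inner) z = cinner x z - cinner y z"
  by (simp only: diff_conv_add_uminus cinner_add_left cinner_minus_left)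

lemma cinner_diff_right: "cinner (x::'a::complex_inner) (y - z) = cinner x y - cinner x z"
  by (simp only: diff_conv_add_uminus cinner_add_right cinner_minus_right)

lemma cinner_sum_left: "cinner (\<Sum>i\<in>I. f i) (y::'a::complex_inner) = (\<Sum>i\<in>I. cinner (f i) y)"
  by (induction I rule: infinite_finite_induct) (auto simp: cinner_add_left)

lemma cinner_sum_right: "cinner (y::'a::complex_inner) (\<Sum>i\<in>I. f i) = (\<Sum>i\<in>I. cinner y (f i))"
  by (induction I rule: infinite_finite_induct) (auto simp: cinner_add_right)

lemma cinner_scaleR_left: "cinner (r *\<^sub>R x::'a::complex_inner) y = complex_of_real r * cinner x y"
  by (simp add: scaleR_scaleC cinner_scaleC_left)

lemma cinner_scaleR_right: "cinner (x::'a::complex_inner) (r *\<^sub>R y) = complex_of_real r * cinner x y"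
  by (simp add: scaleR_scaleC cinner_scaleC_right)

lemma cinner_self_real: "cinner (x::'a::complex_inner) x = complex_of_real ((norm x)^2)"
proof -
  have c: "cnj (cinner x x) = cinner x x" by (rule cinner_conj[symmetric])
  have "Im (cinner x x) = 0" using arg_cong[OF c, of Im] by simp
  moreover have "Re (cinner x x) = (norm x)^2" by (simp add: power2_norm_eq_inner inner_Re_cinner)
  ultimately show ?thesis by (simp add: complex_eq_iff)
qed

lemma norm_sq_Re: "(norm x)^2 = Re (cinner (x::'a::complex_inner) x)"
  by (simp add: cinner_self_real)

lemma norm_scaleC: "norm (c *\<^sub>C (x::'a::complex_inner)) = cmod c * norm x"
proof -
  have "cinner (c *\<^sub>C x) (c *\<^sub>C x) = (c * cnj c) * cinner x x"
    by (simp add: cinner_scaleC_left cinner_scaleC_right mult.assoc)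
  also have "\<dots> = complex_of_real ((cmod c * norm x)^2)"
    by (simp only: complex_norm_square[symmetric] cinner_self_real of_real_mult[symmetric] power_mult_distrib)
  finally have h: "cinner (c *\<^sub>C x) (c *\<^sub>C x) = complex_of_real ((cmod c * norm x)^2)" .
  have "(norm (c *\<^sub>C x))^2 = Re (cinner (c *\<^sub>C x) (c *\<^sub>C x))" by (rule norm_sq_Re)
  also have "\<dots> = (cmod c * norm x)^2" unfolding h by (rule Re_complex_of_real)
  finally show ?thesis by (rule power2_eq_imp_eq) auto
qed

lemma cinner_cauchy_schwarz: "cmod (cinner (x::'a::complex_inner) y) \<le> norm x * norm y"
proof (cases "cinner x y = 0")
  case True thus ?thesis by simp
next
  case False
  define c where "c = cnj (cinner x y) / complex_of_real (cmod (cinner x y))"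
  have cm: "cmod c = 1" using False by (simp add: c_def norm_divide)
  have e: "cnj (cinner x y) * cinner x y = complex_of_real ((cmod (cinner x y))^2)"
    by (simp only: mult.commute[of "cnj _"] complex_norm_square[symmetric])
  have "c * cinner x y = complex_of_real ((cmod (cinner x y))^2) / complex_of_real (cmod (cinner x y))"
    unfolding c_def times_divide_eq_left e by (rule refl)
  also have "\<dots> = complex_of_real (cmod (cinner x y))"
    using False by (simp add: power2_eq_square)
  finally have "c * cinner x y = complex_of_real (cmod (cinner x y))" .
  hence "cmod (cinner x y) = Re (cinner (c *\<^sub>C x) y)" by (simp add: cinner_scaleC_left)
  also have "\<dots> = inner (c *\<^sub>C x) y" by (simp add: inner_Re_cinner)
  also have "\<dots> \<le> norm (c *\<^sub>C x) * norm y" by (rule norm_cauchy_schwarz)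
  also have "\<dots> = norm x * norm y" by (simp add: norm_scaleC cm)
  finally show ?thesis .
qed

lemma norm_add_sq: "(norm (x + y::'a::complex_inner))^2 = (norm x)^2 + (norm y)^2 + 2 * Re (cinner x y)"
proof -
  have "Re (cinner y x) = Re (cinner x y)" using cinner_conj[of y x] by simp
  have "(norm (x + y))^2 = Re (cinner (x + y) (x + y))" by (rule norm_sq_Re)
  also have "\<dots> = Re (cinner x x) + Re (cinner y y) + 2 * Re (cinner x y)"
    using \<open>Re (cinner y x) = Re (cinner x y)\<close> by (simp add: cinner_add_left cinner_add_right)
  finally show ?thesis by (simp only: norm_sq_Re)
qed

lemma pythag: "cinner x y = 0 \<Longrightarrow> (norm (x + y::'a::complex_inner))^2 = (norm x)^2 + (norm y)^2"
  by (simp add: norm_add_sq)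

section \<open>Orthonormal families\<close>

definition onb_on :: "'i set \<Rightarrow> ('i \<Rightarrow> 'a::complex_inner) \<Rightarrow> bool" where
  "onb_on I v \<longleftrightarrow> (\<forall>i\<in>I. \<forall>j\<in>I. cinner (v i) (v j) = (if i = j then 1 else 0))"

definition opr :: "'i set \<Rightarrow> ('i \<Rightarrow> 'a::complex_inner) \<Rightarrow> ('i \<Rightarrow> 'b::complex_vector) \<Rightarrow> 'a \<Rightarrow> 'b" where
  "opr I a b h = (\<Sum>i\<in>I. cinner h (a i) *\<^sub>C b i)"

lemma cinner_lincomb_left:
  assumes "finite I" "onb_on I v" "j \<in> I"
  shows "cinner (\<Sum>i\<in>I. c i *\<^sub>C v i) (v j) = c j"
proof -
  have "cinner (\<Sum>i\<in>I. c i *\<^sub>C v i) (v j) = (\<Sum>i\<in>I. c i * (if i = j then 1 else 0))"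
    using assms by (simp add: cinner_sum_left cinner_scaleC_left onb_on_def)
  also have "\<dots> = (\<Sum>i\<in>I. if i = j then c i else 0)" by (rule sum.cong) auto
  also have "\<dots> = c j" using assms by simp
  finally show ?thesis .
qed

lemma cinner_lincomb_right:
  assumes "finite I" "onb_on I v" "j \<in> I"
  shows "cinner (v j) (\<Sum>i\<in>I. c i *\<^sub>C v i) = cnj (c j)"
  using cinner_lincomb_left[OF assms, of c] cinner_conj[of "v j"] by metis

lemma cinner_lincomb_lincomb:
  assumes "finite I" "onb_on I v"
  shows "cinner (\<Sum>i\<in>I. c i *\<^sub>C v i) (\<Sum>i\<in>I. d i *\<^sub>C v i) = (\<Sum>i\<in>I. c i * cnj (d i))"
proof -
  have "cinner (\<Sum>i\<in>I. c i *\<^sub>C v i) (\<Sum>i\<in>I. d i *\<^sub>C v i) = (\<Sum>i\<in>I. c i * cinner (v i) (\<Sum>i\<in>I. d i *\<^sub>C v i))"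
    by (simp add: cinner_sum_left cinner_scaleC_left)
  also have "\<dots> = (\<Sum>i\<in>I. c i * cnj (d i))"
    using assms by (intro sum.cong refl) (simp add: cinner_lincomb_right)
  finally show ?thesis .
qed

lemma norm_lincomb_sq:
  assumes "finite I" "onb_on I v"
  shows "(norm (\<Sum>i\<in>I. c i *\<^sub>C v i))^2 = (\<Sum>i\<in>I. (cmod (c i))^2)"
proof -
  have "(norm (\<Sum>i\<in>I. c i *\<^sub>C v i))^2 = Re (\<Sum>i\<in>I. c i * cnj (c i))"
    by (simp only: norm_sq_Re cinner_lincomb_lincomb[OF assms])
  also have "\<dots> = (\<Sum>i\<in>I. (cmod (c i))^2)"
    by (simp add: complex_norm_square[symmetric])
  finally show ?thesis .
qed

lemma onb_on_inj:
  assumes "onb_on I v" shows "inj_on v I"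
proof (rule inj_onI)
  fix i j assume "i \<in> I" "j \<in> I" "v i = v j"
  hence "cinner (v i) (v j) = 1" using assms by (auto simp: onb_on_def)
  thus "i = j" using assms \<open>i \<in> I\<close> \<open>j \<in> I\<close> by (auto simp: onb_on_def split: if_splits)
qed

lemma onb_on_subset: "onb_on I v \<Longrightarrow> J \<subseteq> I \<Longrightarrow> onb_on J v"
  unfolding onb_on_def by blast

lemma onb_on_norm: assumes "onb_on I v" "i \<in> I" shows "norm (v i) = 1"
proof -
  have "complex_of_real ((norm (v i))^2) = 1" using cinner_self_real[of "v i"] assms by (auto simp: onb_on_def)
  hence "(norm (v i))^2 = 1^2" by (metis of_real_eq_1_iff power_one)
  thus ?thesis by (rule power2_eq_imp_eq) auto
qed

lemma lincomb_in_cspan: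
  assumes "finite I" "inj_on v I"
  shows "(\<Sum>i\<in>I. c i *\<^sub>C v i) \<in> cspan (v ` I)"
proof -
  have "(\<Sum>i\<in>I. c i *\<^sub>C v i) = (\<Sum>a\<in>v ` I. (c \<circ> the_inv_into I v) a *\<^sub>C a)"
    using assms by (simp add: sum.reindex the_inv_into_f_f)
  thus ?thesis unfolding cspan_def using assms by blast
qed

lemma bessel:
  assumes "finite I" "onb_on I v"
  shows "(\<Sum>i\<in>I. (cmod (cinner h (v i)))^2) \<le> (norm h)^2"
proof -
  define p where "p = (\<Sum>i\<in>I. cinner h (v i) *\<^sub>C v i)"
  have "cinner (h - p) p = 0"
  proof -
    have "cinner (h - p) p = (\<Sum>i\<in>I. cnj (cinner h (v i)) * cinner (h - p) (v i))"
      by (simp add: p_def cinner_sum_right cinner_scaleC_right)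
    also have "\<dots> = 0"
      using assms by (intro sum.neutral ballI) (simp add: cinner_diff_left p_def cinner_lincomb_left[OF assms])
    finally show ?thesis .
  qed
  hence "(norm h)^2 = (norm (h - p))^2 + (norm p)^2" using pythag[of "h - p" p] by simp
  moreover have "(norm p)^2 = (\<Sum>i\<in>I. (cmod (cinner h (v i)))^2)"
    unfolding p_def using assms by (rule norm_lincomb_sq)
  ultimately show ?thesis by simp
qed

lemma opr_add: "opr I a b (x + y) = opr I a b x + opr I a b y"
  by (simp add: opr_def cinner_add_left scaleC_add_left sum.distrib)

lemma opr_scaleC: "opr I a b (c *\<^sub>C x) = c *\<^sub>C opr I a b x"
  by (simp add: opr_def cinner_scaleC_left scaleC_sum_right scaleC_scaleC)

lemma opr_scaleR: "opr I a b (r *\<^sub>R x) = r *\<^sub>R opr I a b x"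
  by (simp add: scaleR_scaleC opr_scaleC)

lemma opr_diff: "opr I a b (x - y) = opr I a b x - opr I a b y"
  by (simp add: opr_def cinner_diff_left scaleC_diff_left sum_subtractf)

lemma opr_zero[simp]: "opr I a b 0 = 0"
  by (simp add: opr_def)

lemma opr_sum: "opr I a b (\<Sum>j\<in>J. f j) = (\<Sum>j\<in>J. opr I a b (f j))"
  by (induction J rule: infinite_finite_induct) (auto simp: opr_add)

lemma opr_basis:
  assumes "finite I" "onb_on I a" "j \<in> I"
  shows "opr I a b (a j) = b j"
proof -
  have "opr I a b (a j) = (\<Sum>i\<in>I. (if j = i then 1 else 0) *\<^sub>C b i)"
    unfolding opr_def using assms by (intro sum.cong refl) (simp add: onb_on_def)
  also have "\<dots> = (\<Sum>i\<in>I. if i = j then b i else 0)" by (rule sum.cong) auto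
  also have "\<dots> = b j" using assms by simp
  finally show ?thesis .
qed

lemma opr_orth:
  assumes "\<forall>i\<in>I. cinner h (a i) = 0"
  shows "opr I a b h = 0"
  using assms by (simp add: opr_def)

lemma norm_opr_sq:
  assumes "finite I" "onb_on I b"
  shows "(norm (opr I a b h))^2 = (\<Sum>i\<in>I. (cmod (cinner h (a i)))^2)"
  unfolding opr_def using assms by (rule norm_lincomb_sq)

lemma norm_opr_le:
  assumes "finite I" "onb_on I a" "onb_on I b"
  shows "norm (opr I a b h) \<le> norm h"
proof -
  have "(norm (opr I a b h))^2 = (\<Sum>i\<in>I. (cmod (cinner h (a i)))^2)" by (rule norm_opr_sq[OF assms(1,3)])
  also have "\<dots> \<le> (norm h)^2" by (rule bessel[OF assms(1,2)])
  finally have "(norm (opr I a b h))^2 \<le> (norm h)^2" .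
  thus ?thesis by (simp add: power2_le_iff_abs_le)
qed

lemma norm_opr_eq:
  assumes "finite I" "onb_on I a" "onb_on I b"
    and "h = (\<Sum>i\<in>I. cinner h (a i) *\<^sub>C a i)"
  shows "norm (opr I a b h) = norm h"
proof -
  have "(norm h)^2 = (\<Sum>i\<in>I. (cmod (cinner h (a i)))^2)"
    using assms(4) norm_lincomb_sq[OF assms(1,2), of "\<lambda>i. cinner h (a i)"] by simp
  hence "(norm (opr I a b h))^2 = (norm h)^2" using norm_opr_sq[OF assms(1,3)] by simp
  thus ?thesis by (simp add: power2_eq_iff_nonneg)
qed

lemma opr_bounded_linear:
  assumes "finite I" "onb_on I a" "onb_on I b"
  shows "bounded_linear (opr I a b)"
  by (rule bounded_linear_intro[where K=1]) (auto simp: opr_add opr_scaleR norm_opr_le[OF assms])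

lemma opr_clinear: "clinear (opr I a b)"
  by (simp add: clinear_def opr_add opr_scaleC)

lemma opr_range:
  assumes "finite I" "onb_on I b"
  shows "range (opr I a b) \<subseteq> cspan (b ` I)"
proof
  fix y assume "y \<in> range (opr I a b)"
  then obtain h where "y = opr I a b h" by auto
  thus "y \<in> cspan (b ` I)"
    unfolding opr_def using lincomb_in_cspan[OF assms(1) onb_on_inj[OF assms(2)]] by simp
qed

section \<open>Gram--Schmidt for general sesquilinear forms\<close>

definition sesq :: "('a::complex_vector \<Rightarrow> 'a \<Rightarrow> complex) \<Rightarrow> bool" where
  "sesq B \<longleftrightarrow> (\<forall>x y z. B (x + y) z = B x z + B y z) \<and> (\<forall>c x y. B (c *\<^sub>C x) y = c * B x y)
     \<and> (\<forall>x y. B x y = cnj (B y x))"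

definition posdef :: "('a::complex_vector \<Rightarrow> 'a \<Rightarrow> complex) \<Rightarrow> bool" where
  "posdef B \<longleftrightarrow> (\<forall>x. x \<noteq> 0 \<longrightarrow> 0 < Re (B x x))"

definition Bon :: "('a::complex_vector \<Rightarrow> 'a \<Rightarrow> complex) \<Rightarrow> nat \<Rightarrow> (nat \<Rightarrow> 'a) \<Rightarrow> bool" where
  "Bon B m u \<longleftrightarrow> (\<forall>i<m. \<forall>j<m. B (u i) (u j) = (if i = j then 1 else 0))"

definition Bexp :: "('a::complex_vector \<Rightarrow> 'a \<Rightarrow> complex) \<Rightarrow> nat \<Rightarrow> (nat \<Rightarrow> 'a) \<Rightarrow> 'a \<Rightarrow> bool" where
  "Bexp B m u h \<longleftrightarrow> h = (\<Sum>i<m. B h (u i) *\<^sub>C u i)"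

context
  fixes B :: "'a::complex_vector \<Rightarrow> 'a \<Rightarrow> complex"
  assumes sB: "sesq B"
begin

lemma B_add_left: "B (x + y) z = B x z + B y z" using sB unfolding sesq_def by blast
lemma B_scaleC_left: "B (c *\<^sub>C x) y = c * B x y" using sB unfolding sesq_def by blast
lemma B_conj: "B x y = cnj (B y x)" using sB unfolding sesq_def by blast

lemma B_add_right: "B x (y + z) = B x y + B x z"
proof -
  have "B x (y + z) = cnj (B (y + z) x)" by (rule B_conj)
  also have "\<dots> = cnj (B y x) + cnj (B z x)" by (simp add: B_add_left)
  also have "\<dots> = B x y + B x z" by (simp only: B_conj[of x y, symmetric] B_conj[of x z, symmetric])
  finally show ?thesis .
qed

lemma B_scaleC_right: "B x (c *\<^sub>C y) = cnj c * B x y"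
proof -
  have "B x (c *\<^sub>C y) = cnj (B (c *\<^sub>C y) x)" by (rule B_conj)
  also have "\<dots> = cnj c * cnj (B y x)" by (simp only: B_scaleC_left complex_cnj_mult)
  also have "\<dots> = cnj c * B x y" by (simp only: B_conj[of x y, symmetric])
  finally show ?thesis .
qed

lemma B_zero_left[simp]: "B 0 y = 0"
  using B_scaleC_left[of 0 0 y] by simp

lemma B_zero_right[simp]: "B x 0 = 0"
  using B_scaleC_right[of x 0 0] by simp

lemma B_sum_left: "B (\<Sum>i\<in>I. f i) y = (\<Sum>i\<in>I. B (f i) y)"
  by (induction I rule: infinite_finite_induct) (auto simp: B_add_left)

lemma B_sum_right: "B y (\<Sum>i\<in>I. f i) = (\<Sum>i\<in>I. B y (f i))"
  by (induction I rule: infinite_finite_induct) (auto simp: B_add_right)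

lemma B_diff_left: "B (x - y) z = B x z - B y z"
proof -
  have "B (x - y) z + B y z = B x z" by (simp only: B_add_left[symmetric] diff_add_cancel)
  thus ?thesis by (simp add: eq_diff_eq)
qed

lemma B_self_real: "B x x = complex_of_real (Re (B x x))"
proof -
  have "Im (B x x) = 0" using arg_cong[OF B_conj[of x x], of Im] by simp
  thus ?thesis by (simp add: complex_eq_iff)
qed

lemma B_lincomb_left:
  assumes "Bon B m u" "j < m"
  shows "B (\<Sum>i<m. c i *\<^sub>C u i) (u j) = c j"
proof -
  have "B (\<Sum>i<m. c i *\<^sub>C u i) (u j) = (\<Sum>i<m. c i * (if i = j then 1 else 0))"
    using assms by (simp add: B_sum_left B_scaleC_left Bon_def)
  also have "\<dots> = (\<Sum>i<m. if i = j then c i else 0)" by (rule sum.cong) auto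
  also have "\<dots> = c j" using assms by simp
  finally show ?thesis .
qed

lemma B_lincomb_right:
  assumes "Bon B m u" "j < m"
  shows "B (u j) (\<Sum>i<m. c i *\<^sub>C u i) = cnj (c j)"
proof -
  have "B (u j) (\<Sum>i<m. c i *\<^sub>C u i) = cnj (B (\<Sum>i<m. c i *\<^sub>C u i) (u j))" by (rule B_conj)
  thus ?thesis by (simp only: B_lincomb_left[OF assms])
qed

lemma B_exp_sum:
  assumes "Bexp B m u h"
  shows "B h y = (\<Sum>i<m. B h (u i) * B (u i) y)"
proof -
  have "B h y = B (\<Sum>i<m. B h (u i) *\<^sub>C u i) y" using assms unfolding Bexp_def by simp
  also have "\<dots> = (\<Sum>i<m. B h (u i) * B (u i) y)" by (simp add: B_sum_left B_scaleC_left)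
  finally show ?thesis .
qed

lemma B_exp_orth:
  assumes "Bexp B m u h" "\<forall>i<m. B (u i) y = 0"
  shows "B h y = 0"
  using B_exp_sum[OF assms(1), of y] assms(2) by simp

lemma Bexp_inner:
  assumes "Bexp B m u a" "Bexp B m u b" "Bon B m u"
  shows "B a b = (\<Sum>i<m. B a (u i) * cnj (B b (u i)))"
proof -
  have "B a b = (\<Sum>i<m. B a (u i) * B (u i) b)" by (rule B_exp_sum[OF assms(1)])
  also have "\<dots> = (\<Sum>i<m. B a (u i) * cnj (B b (u i)))"
  proof (intro sum.cong refl)
    fix i show "B a (u i) * B (u i) b = B a (u i) * cnj (B b (u i))" using B_conj[of "u i" b] by simp
  qed
  finally show ?thesis .
qed

lemma gs_step:
  assumes pd: "posdef B" and on: "Bon B m u"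
  shows "\<exists>m' u'. (m' = m \<or> m' = Suc m) \<and> (\<forall>i<m. u' i = u i) \<and> Bon B m' u'
           \<and> (\<forall>h. Bexp B m u h \<longrightarrow> Bexp B m' u' h) \<and> Bexp B m' u' a"
proof -
  define r where "r = a - (\<Sum>i<m. B a (u i) *\<^sub>C u i)"
  have rorth: "B r (u j) = 0" if "j < m" for j
    using B_lincomb_left[OF on that, of "\<lambda>i. B a (u i)"] by (simp add: r_def B_diff_left)
  show ?thesis
  proof (cases "r = 0")
    case True
    have "a = (\<Sum>i<m. B a (u i) *\<^sub>C u i)" using True unfolding r_def right_minus_eq .
    hence "Bexp B m u a" unfolding Bexp_def .
    thus ?thesis using on by blast
  next
    case False
    define nr where "nr = sqrt (Re (B r r))"
    have rpos: "0 < Re (B r r)" using pd False by (simp add: posdef_def)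
    hence nrpos: "nr > 0" by (simp add: nr_def)
    have Brr: "B r r = complex_of_real (nr^2)" using rpos B_self_real[of r] by (simp add: nr_def)
    define v where "v = complex_of_real (1 / nr) *\<^sub>C r"
    define u' where "u' = u(m := v)"
    have u'lo: "\<forall>i<m. u' i = u i" by (simp add: u'_def)
    have vorth: "B v (u j) = 0" if "j < m" for j using rorth[OF that] by (simp add: v_def B_scaleC_left)
    have vorth': "B (u j) v = 0" if "j < m" for j using vorth[OF that] B_conj[of "u j" v] by simp
    have vv: "B v v = 1"
    proof -
      have "B v v = complex_of_real (1/nr) * complex_of_real (1/nr) * B r r"
        by (simp add: v_def B_scaleC_left B_scaleC_right)
      also have "\<dots> = 1" using nrpos by (simp add: Brr power2_eq_square)
      finally show ?thesis .
    qed
    have on': "Bon B (Suc m) u'"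
      unfolding Bon_def
    proof (intro allI impI)
      fix i j assume i: "i < Suc m" and j: "j < Suc m"
      show "B (u' i) (u' j) = (if i = j then 1 else 0)"
      proof (cases "i = m")
        case True
        thus ?thesis using j vv vorth by (cases "j = m") (auto simp: u'_def)
      next
        case False
        hence "i < m" using i by simp
        thus ?thesis using j vorth' on by (cases "j = m") (auto simp: u'_def Bon_def)
      qed
    qed
    have sumsplit: "(\<Sum>i<Suc m. B h (u' i) *\<^sub>C u' i) = (\<Sum>i<m. B h (u i) *\<^sub>C u i) + B h v *\<^sub>C v" for h
      by (simp add: u'_def)
    have old: "Bexp B (Suc m) u' h" if "Bexp B m u h" for h
    proof -
      have "B h v = 0" using B_exp_orth[OF that] vorth' by simp
      hence E: "(\<Sum>i<Suc m. B h (u' i) *\<^sub>C u' i) = (\<Sum>i<m. B h (u i) *\<^sub>C u i)"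
        unfolding sumsplit by simp
      show ?thesis unfolding Bexp_def using trans[OF that[unfolded Bexp_def] E[symmetric]] .
    qed
    have "B a v = complex_of_real nr"
    proof -
      have a: "a = r + (\<Sum>i<m. B a (u i) *\<^sub>C u i)" by (simp add: r_def)
      have "B a v = B r v + (\<Sum>i<m. B a (u i) * B (u i) v)"
        by (subst a) (simp add: B_add_left B_sum_left B_scaleC_left)
      also have "\<dots> = B r v" using vorth' by simp
      also have "\<dots> = complex_of_real (1/nr) * B r r" by (simp add: v_def B_scaleC_right)
      also have "\<dots> = complex_of_real nr" using nrpos by (simp add: Brr power2_eq_square)
      finally show ?thesis .
    qed
    hence "B a v *\<^sub>C v = r" using nrpos by (simp add: v_def scaleC_scaleC)
    hence "Bexp B (Suc m) u' a" unfolding Bexp_def sumsplit by (simp add: r_def)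
    thus ?thesis using on' old u'lo by blast
  qed
qed

lemma gs_list:
  assumes pd: "posdef B"
  shows "Bon B m u \<Longrightarrow> \<exists>m' u'. m \<le> m' \<and> (\<forall>i<m. u' i = u i) \<and> Bon B m' u'
           \<and> (\<forall>h. Bexp B m u h \<longrightarrow> Bexp B m' u' h) \<and> (\<forall>a\<in>set L. Bexp B m' u' a)"
proof (induction L arbitrary: m u)
  case Nil
  show ?case by (rule exI[of _ m], rule exI[of _ u]) (simp add: Nil)
next
  case (Cons a L)
  obtain m1 u1 where 1: "m1 = m \<or> m1 = Suc m" "\<forall>i<m. u1 i = u i" "Bon B m1 u1"
      "\<forall>h. Bexp B m u h \<longrightarrow> Bexp B m1 u1 h" "Bexp B m1 u1 a"
    using gs_step[OF pd Cons.prems] by blast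
  obtain m2 u2 where 2: "m1 \<le> m2" "\<forall>i<m1. u2 i = u1 i" "Bon B m2 u2"
      "\<forall>h. Bexp B m1 u1 h \<longrightarrow> Bexp B m2 u2 h" "\<forall>a\<in>set L. Bexp B m2 u2 a"
    using Cons.IH[OF 1(3)] by blast
  have a1: "m \<le> m2" using 1(1) 2(1) by auto
  have a2: "\<forall>i<m. u2 i = u i" using 1(1,2) 2(2) by auto
  have a3: "\<forall>h. Bexp B m u h \<longrightarrow> Bexp B m2 u2 h" using 1(4) 2(4) by blast
  have a4: "\<forall>a'\<in>set (a # L). Bexp B m2 u2 a'" using 1(5) 2(4,5) by auto
  show ?case by (rule exI[of _ m2], rule exI[of _ u2]) (intro conjI a1 a2 a3 a4 2(3))
qed

end

lemma sesq_cinner: "sesq (cinner :: 'a::complex_inner \<Rightarrow> 'a \<Rightarrow> complex)"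
  unfolding sesq_def
proof (intro conjI allI)
  fix x y z :: 'a and c
  show "cinner (x + y) z = cinner x z + cinner y z" by (rule cinner_add_left)
  show "cinner (c *\<^sub>C x) y = c * cinner x y" by (rule cinner_scaleC_left)
  show "cinner x y = cnj (cinner y x)" by (rule cinner_conj)
qed

lemma posdef_cinner: "posdef (cinner :: 'a::complex_inner \<Rightarrow> 'a \<Rightarrow> complex)"
  unfolding posdef_def
proof (intro allI impI)
  fix x :: 'a assume "x \<noteq> 0"
  hence "0 < (norm x)^2" by simp
  thus "0 < Re (cinner x x)" by (simp only: norm_sq_Re)
qed

lemma Bon_cinner_onb: "Bon cinner n u \<longleftrightarrow> onb_on {..<n} u"
  unfolding Bon_def onb_on_def lessThan_iff by blast

lemma Bexp_cinner_iff: "Bexp cinner n u h \<longleftrightarrow> h = (\<Sum>i<n. cinner h (u i) *\<^sub>C u i)"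
  by (simp add: Bexp_def)

lemma B_lincomb_lincomb:
  assumes sB: "sesq B" and on: "Bon B m u"
  shows "B (\<Sum>i<m. c i *\<^sub>C u i) (\<Sum>i<m. d i *\<^sub>C u i) = (\<Sum>i<m. c i * cnj (d i))"
proof -
  have "B (\<Sum>i<m. c i *\<^sub>C u i) (\<Sum>i<m. d i *\<^sub>C u i) = (\<Sum>i<m. c i * B (u i) (\<Sum>i<m. d i *\<^sub>C u i))"
    by (simp add: B_sum_left[OF sB] B_scaleC_left[OF sB])
  also have "\<dots> = (\<Sum>i<m. c i * cnj (d i))"
    by (intro sum.cong refl) (simp add: B_lincomb_right[OF sB on])
  finally show ?thesis .
qed

lemma Bexp_trans:
  assumes sB: "sesq B" and sB': "sesq B'" and h: "Bexp B' m e h" and e: "\<forall>i<m. Bexp B W u (e i)"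
  shows "Bexp B W u h"
proof -
  have "h = (\<Sum>i<m. B' h (e i) *\<^sub>C (\<Sum>k<W. B (e i) (u k) *\<^sub>C u k))"
  proof -
    have "h = (\<Sum>i<m. B' h (e i) *\<^sub>C e i)" using h unfolding Bexp_def .
    also have "\<dots> = (\<Sum>i<m. B' h (e i) *\<^sub>C (\<Sum>k<W. B (e i) (u k) *\<^sub>C u k))"
      using e unfolding Bexp_def by (intro sum.cong refl) (metis lessThan_iff)
    finally show ?thesis .
  qed
  also have "\<dots> = (\<Sum>k<W. (\<Sum>i<m. B' h (e i) * B (e i) (u k)) *\<^sub>C u k)"
    by (simp add: scaleC_sum_right scaleC_sum_left scaleC_scaleC sum.swap[of _ "{..<m}"])
  finally have hh: "h = (\<Sum>k<W. (\<Sum>i<m. B' h (e i) * B (e i) (u k)) *\<^sub>C u k)" .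
  have "B h (u k) = (\<Sum>i<m. B' h (e i) * B (e i) (u k))" for k
  proof -
    have "B h (u k) = B (\<Sum>i<m. B' h (e i) *\<^sub>C e i) (u k)" using h unfolding Bexp_def by simp
    also have "\<dots> = (\<Sum>i<m. B' h (e i) * B (e i) (u k))" by (simp add: B_sum_left[OF sB] B_scaleC_left[OF sB])
    finally show ?thesis .
  qed
  thus ?thesis unfolding Bexp_def using hh by simp
qed

lemma lincomb_in_cspan':
  assumes "finite I" "inj_on v I"
  shows "(\<Sum>i\<in>I. c i *\<^sub>C v i) \<in> cspan (v ` I)"
  by (rule lincomb_in_cspan[OF assms])

lemma opr_range':
  assumes "finite I" "inj_on b I"
  shows "range (opr I a b) \<subseteq> cspan (b ` I)"
proof
  fix y assume "y \<in> range (opr I a b)"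
  then obtain h where "y = opr I a b h" by auto
  thus "y \<in> cspan (b ` I)"
    unfolding opr_def using lincomb_in_cspan[OF assms] by simp
qed

lemma fresh_ext:
  assumes inf: "\<not> (\<exists>B::'a::complex_inner set. finite B \<and> cspan B = UNIV)"
    and on: "Bon cinner m (u::nat \<Rightarrow> 'a)"
  shows "\<exists>u'. (\<forall>i<m. u' i = u i) \<and> Bon cinner (m + K) u'"
proof (induction K)
  case 0
  show ?case using on by (intro exI[of _ u]) simp
next
  case (Suc K)
  then obtain u1 where u1: "\<forall>i<m. u1 i = u i" "Bon cinner (m + K) u1" by blast
  have "\<exists>v. \<not> Bexp cinner (m + K) u1 v"
  proof (rule ccontr)
    assume "\<not> (\<exists>v. \<not> Bexp cinner (m + K) u1 v)"
    hence all: "\<forall>v. v = (\<Sum>i<m+K. cinner v (u1 i) *\<^sub>C u1 i)" by (simp add: Bexp_def)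
    have inj: "inj_on u1 {..<m+K}" using u1(2) onb_on_inj by (simp add: Bon_cinner_onb)
    have "cspan (u1 ` {..<m+K}) = UNIV"
    proof (rule set_eqI, rule iffI)
      fix v :: 'a assume "v \<in> UNIV"
      have "(\<Sum>i<m+K. cinner v (u1 i) *\<^sub>C u1 i) \<in> cspan (u1 ` {..<m+K})"
        by (rule lincomb_in_cspan[OF _ inj]) simp
      thus "v \<in> cspan (u1 ` {..<m+K})" using all[rule_format, of v] by simp
    qed simp
    thus False using inf by blast
  qed
  then obtain v where v: "\<not> Bexp cinner (m + K) u1 v" by blast
  obtain m' u' where g: "m' = m + K \<or> m' = Suc (m + K)" "\<forall>i<m+K. u' i = u1 i" "Bon cinner m' u'"
      "Bexp cinner m' u' v"
    using gs_step[OF sesq_cinner posdef_cinner u1(2), of v] by blast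
  have "m' \<noteq> m + K"
  proof
    assume "m' = m + K"
    hence "Bexp cinner (m + K) u1 v" using g(2,4) unfolding Bexp_def
      by (metis (no_types, lifting) lessThan_iff sum.cong)
    thus False using v by simp
  qed
  hence "m' = m + Suc K" using g(1) by simp
  thus ?case using g(2,3) u1(1) by (intro exI[of _ u']) auto
qed


definition inspan :: "'i set \<Rightarrow> ('i \<Rightarrow> 'a::complex_inner) \<Rightarrow> 'a \<Rightarrow> bool" where
  "inspan I v h \<longleftrightarrow> h = opr I v v h"

lemma inspan_Bexp: "inspan {..<n} v h \<longleftrightarrow> Bexp cinner n v h"
  by (simp add: inspan_def Bexp_def opr_def)

lemma inspan_add: "inspan I v a \<Longrightarrow> inspan I v b \<Longrightarrow> inspan I v (a + b)"
  by (simp add: inspan_def opr_add)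

lemma inspan_diff: "inspan I v a \<Longrightarrow> inspan I v b \<Longrightarrow> inspan I v (a - b)"
  by (simp add: inspan_def opr_diff)

lemma inspan_scaleC: "inspan I v a \<Longrightarrow> inspan I v (c *\<^sub>C a)"
  by (metis inspan_def opr_scaleC)

lemma inspan_scaleR: "inspan I v a \<Longrightarrow> inspan I v (r *\<^sub>R a)"
  by (metis inspan_def opr_scaleR)

lemma inspan_zero: "inspan I v 0"
  by (simp add: inspan_def)

lemma inspan_sum: "(\<And>j. j \<in> J \<Longrightarrow> inspan I v (f j)) \<Longrightarrow> inspan I v (\<Sum>j\<in>J. f j)"
proof (induction J rule: infinite_finite_induct)
  case (infinite J) thus ?case by (simp add: inspan_zero)
next
  case empty thus ?case by (simp add: inspan_zero)
next
  case (insert j J) thus ?case by (simp add: inspan_add)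
qed

lemma inspan_basis: "finite I \<Longrightarrow> onb_on I v \<Longrightarrow> j \<in> I \<Longrightarrow> inspan I v (v j)"
  by (simp add: inspan_def opr_basis)

lemma inspan_lincomb: "finite I \<Longrightarrow> onb_on I v \<Longrightarrow> inspan I v (\<Sum>i\<in>I. c i *\<^sub>C v i)"
  by (intro inspan_sum inspan_scaleC inspan_basis) auto

lemma inspan_orth:
  assumes "inspan I v h" "\<forall>i\<in>I. cinner (v i) w = 0"
  shows "cinner h w = 0"
proof -
  have "cinner h w = cinner (\<Sum>i\<in>I. cinner h (v i) *\<^sub>C v i) w"
    using assms(1) by (simp add: inspan_def opr_def)
  also have "\<dots> = 0" using assms(2) by (simp add: cinner_sum_left cinner_scaleC_left)
  finally show ?thesis .
qed

lemma inspan_orth':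
  assumes "inspan I v h" "\<forall>i\<in>I. cinner w (v i) = 0"
  shows "cinner w h = 0"
proof -
  have "cinner h w = 0" using assms by (intro inspan_orth) (auto intro: cinner_conj[THEN trans])
  thus ?thesis using cinner_conj[of w h] by simp
qed

lemma cinner_proj_right:
  assumes "finite I" "onb_on I v" "inspan I v y"
  shows "cinner (\<Sum>i\<in>I. cinner h (v i) *\<^sub>C v i) y = cinner h y"
proof -
  have "cinner h y = cinner h (\<Sum>i\<in>I. cinner y (v i) *\<^sub>C v i)"
    using assms(3) by (simp add: inspan_def opr_def)
  also have "\<dots> = (\<Sum>i\<in>I. cnj (cinner y (v i)) * cinner h (v i))"
    by (simp add: cinner_sum_right cinner_scaleC_right)
  also have "\<dots> = (\<Sum>i\<in>I. cinner h (v i) * cinner (v i) y)"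
    by (intro sum.cong refl) (metis cinner_conj mult.commute)
  also have "\<dots> = cinner (\<Sum>i\<in>I. cinner h (v i) *\<^sub>C v i) y"
    by (simp add: cinner_sum_left cinner_scaleC_left)
  finally show ?thesis by simp
qed



lemma main_constr:
  fixes T :: "'a::complex_inner \<Rightarrow>\<^sub>L 'a" and x z :: 'a and xs ys :: "nat \<Rightarrow> 'a"
  assumes inf: "\<not> (\<exists>B::'a set. finite B \<and> cspan B = UNIV)"
    and nxy: "\<forall>j<n. norm (xs j) = 1 \<and> norm (ys j) = 1"
    and R1: "R > 1" and lin: "clinear (blinfun_apply T)" and nT: "norm T \<le> R"
    and x0: "x \<noteq> 0"
    and d0: "0 < \<delta>" and d1: "\<delta> \<le> 1/2" and dR: "\<delta> * R < \<epsilon>"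
    and kap: "\<kappa> = 1 - (1 - \<delta>)^2"
    and N2: "2 \<le> N" and Nz: "norm z / R^N \<le> \<kappa> * norm x / 4" and Nd: "(1 - \<delta>)^N \<le> \<kappa> / 4"
  shows "\<exists>S::'a \<Rightarrow>\<^sub>L 'a. clinear (blinfun_apply S) \<and> finite_rank (blinfun_apply S) \<and> norm S \<le> R \<and>
         (\<forall>j<n. cmod (cinner (blinfun_apply (S - T) (xs j)) (ys j)) < \<epsilon> \<and>
                cinner (z - (blinfun_apply S ^^ N) x) (ys j) = 0) \<and>
         (\<forall>l<N. norm ((blinfun_apply S ^^ (l + 1)) x) = R * norm ((blinfun_apply S ^^ l) x))"
proof -
  define Tf where "Tf = blinfun_apply T"
  have Tadd: "Tf (a + b) = Tf a + Tf b" for a b using lin by (simp add: clinear_def Tf_def)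
  have TC: "Tf (c *\<^sub>C a) = c *\<^sub>C Tf a" for c a using lin by (simp add: clinear_def Tf_def)
  have Tn: "norm (Tf h) \<le> R * norm h" for h
    unfolding Tf_def using norm_blinfun[of T h] nT by (meson mult_right_mono norm_ge_zero order_trans)
  have keq: "\<kappa> = \<delta> * (2 - \<delta>)" using kap by (simp add: power2_eq_square algebra_simps)
  have kpos: "0 < \<kappa>" using d0 d1 keq by simp
  have kle: "\<kappa> \<le> 1" using kap by simp
  have R0: "R > 0" using R1 by simp
  have d1': "0 \<le> 1 - \<delta>" using d1 by simp

  define L0 where "L0 = x # z # map xs [0..<n] @ map ys [0..<n]"
  have "Bon cinner 0 (\<lambda>_. 0::'a)" by (simp add: Bon_def)
  from gs_list[OF sesq_cinner posdef_cinner this, of L0]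
  obtain m e where eon': "Bon cinner m e" and eexp: "\<forall>a\<in>set L0. Bexp cinner m e a" by blast
  have eon: "onb_on {..<m} e" using eon' by (simp add: Bon_cinner_onb)
  define F where "F = inspan {..<m} e"
  have inL0: "a \<in> set L0 \<Longrightarrow> F a" for a using eexp by (simp add: F_def inspan_Bexp)
  have xF: "F x" by (rule inL0) (simp add: L0_def)
  have zF: "F z" by (rule inL0) (simp add: L0_def)
  have xsF: "F (xs j)" if "j < n" for j by (rule inL0) (use that in \<open>simp add: L0_def\<close>)
  have ysF: "F (ys j)" if "j < n" for j by (rule inL0) (use that in \<open>simp add: L0_def\<close>)
  have eF: "F (e i)" if "i < m" for i unfolding F_def using eon that by (intro inspan_basis) auto
  have lincF: "F (\<Sum>i<m. c i *\<^sub>C e i)" for c unfolding F_def using eon by (intro inspan_lincomb) auto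
  have F_add: "F a \<Longrightarrow> F b \<Longrightarrow> F (a + b)" for a b by (simp add: F_def inspan_add)
  have F_diff: "F a \<Longrightarrow> F b \<Longrightarrow> F (a - b)" for a b by (simp add: F_def inspan_diff)
  have F_scaleC: "F a \<Longrightarrow> F (c *\<^sub>C a)" for a c by (simp add: F_def inspan_scaleC)
  have F_scaleR: "F a \<Longrightarrow> F (r *\<^sub>R a)" for a r by (simp add: F_def inspan_scaleR)

  define PF where "PF h = (\<Sum>i<m. cinner h (e i) *\<^sub>C e i)" for h
  have PF_F: "F (PF h)" for h unfolding PF_def by (rule lincF)
  have PF_norm: "norm (PF h) \<le> norm h" for h
  proof -
    have "(norm (PF h))^2 = (\<Sum>i<m. (cmod (cinner h (e i)))^2)"
      unfolding PF_def using eon by (intro norm_lincomb_sq) auto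
    also have "\<dots> \<le> (norm h)^2" using eon by (intro bessel) auto
    finally show ?thesis by (simp add: power2_le_iff_abs_le)
  qed
  have PF_inner: "F y \<Longrightarrow> cinner (PF h) y = cinner h y" for h y
    unfolding PF_def F_def using eon by (intro cinner_proj_right) auto
  have PF_add: "PF (a + b) = PF a + PF b" for a b
    by (simp add: PF_def cinner_add_left scaleC_add_left sum.distrib)
  have PF_scaleC: "PF (c *\<^sub>C a) = c *\<^sub>C PF a" for a c
    by (simp add: PF_def cinner_scaleC_left scaleC_sum_right scaleC_scaleC)

  define Cp where "Cp h = ((1 - \<delta>) / R) *\<^sub>R PF (Tf h)" for h
  have Cp_F: "F (Cp h)" for h unfolding Cp_def by (intro F_scaleR PF_F)
  have Cp_norm: "norm (Cp h) \<le> (1 - \<delta>) * norm h" for h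
  proof -
    have "norm (Cp h) = ((1 - \<delta>) / R) * norm (PF (Tf h))" using R0 d1' by (simp add: Cp_def)
    also have "\<dots> \<le> ((1 - \<delta>) / R) * (R * norm h)"
      using PF_norm[of "Tf h"] Tn[of h] R0 d1' by (intro mult_left_mono) auto
    also have "\<dots> = (1 - \<delta>) * norm h" using R0 by simp
    finally show ?thesis .
  qed
  have Cp_add: "Cp (a + b) = Cp a + Cp b" for a b by (simp add: Cp_def Tadd PF_add scaleR_add_right)
  have Cp_scaleC: "Cp (c *\<^sub>C a) = c *\<^sub>C Cp a" for a c
    by (simp add: Cp_def TC PF_scaleC scaleR_scaleC_commute)
  have Cp_sum: "Cp (\<Sum>i\<in>J. g i) = (\<Sum>i\<in>J. Cp (g i))" for J g
  proof (induction J rule: infinite_finite_induct)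
    case (infinite A) thus ?case using Cp_scaleC[of 0 0] by simp
  next
    case empty thus ?case using Cp_scaleC[of 0 0] by simp
  next
    case (insert j J) thus ?case by (simp add: Cp_add)
  qed
  have Cp_inner: "F y \<Longrightarrow> cinner (Cp h) y = complex_of_real ((1 - \<delta>) / R) * cinner (Tf h) y" for h y
    by (simp add: Cp_def cinner_scaleR_left PF_inner)
  define A where "A k = (Cp ^^ k) x" for k
  have A_Suc: "A (Suc k) = Cp (A k)" for k by (simp add: A_def)
  have A_F: "F (A k)" for k by (cases k) (simp_all add: A_def xF Cp_F)
  have A_norm: "norm (A k) \<le> (1 - \<delta>)^k * norm x" for k
  proof (induction k)
    case 0 thus ?case by (simp add: A_def)
  next
    case (Suc k)
    have "norm (A (Suc k)) \<le> (1 - \<delta>) * norm (A k)" unfolding A_Suc by (rule Cp_norm)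
    also have "\<dots> \<le> (1 - \<delta>) * ((1 - \<delta>)^k * norm x)" using Suc d1' by (intro mult_left_mono)
    finally show ?case by simp
  qed

  define Bf where "Bf a b = cinner a b - cinner (Cp a) (Cp b)" for a b
  have sBf: "sesq Bf" unfolding sesq_def
  proof (intro conjI allI)
    fix a b c :: 'a and k :: complex
    show "Bf (a + b) c = Bf a c + Bf b c" by (simp add: Bf_def Cp_add cinner_add_left)
    show "Bf (k *\<^sub>C a) b = k * Bf a b" by (simp add: Bf_def Cp_scaleC cinner_scaleC_left algebra_simps)
    show "Bf a b = cnj (Bf b a)" using cinner_conj[of a b] cinner_conj[of "Cp a" "Cp b"] by (simp add: Bf_def)
  qed
  have Bf_low: "\<kappa> * (norm h)^2 \<le> Re (Bf h h)" for h
  proof -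
    have "Re (Bf h h) = (norm h)^2 - (norm (Cp h))^2" by (simp add: Bf_def norm_sq_Re)
    moreover have "(norm (Cp h))^2 \<le> ((1 - \<delta>) * norm h)^2" by (rule power_mono[OF Cp_norm]) simp
    hence "(norm (Cp h))^2 \<le> (1 - \<delta>)^2 * (norm h)^2" by (simp only: power_mult_distrib)
    ultimately show ?thesis unfolding kap by (simp add: left_diff_distrib)
  qed
  have pBf: "posdef Bf" unfolding posdef_def
  proof (intro allI impI)
    fix h :: 'a assume "h \<noteq> 0"
    hence "0 < \<kappa> * (norm h)^2" using kpos by simp
    thus "0 < Re (Bf h h)" using Bf_low[of h] by linarith
  qed

  (* B-orthonormal basis starting with x *)
  have "Bon Bf 0 (\<lambda>_. 0::'a)" by (simp add: Bon_def)
  from gs_step[OF sBf pBf this, of x]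
  obtain m1 u1 where m1: "m1 = 0 \<or> m1 = Suc 0" "Bon Bf m1 u1" "Bexp Bf m1 u1 x" by blast
  have "m1 \<noteq> 0"
  proof
    assume "m1 = 0"
    hence "x = 0" using m1(3) by (simp add: Bexp_def)
    thus False using x0 by simp
  qed
  hence m11: "m1 = 1" using m1(1) by simp
  have Bm1: "Bexp Bf 1 u1 x" using m1(3) m11 by simp
  from gs_list[OF sBf pBf m1(2), of "map e [0..<m]"]
  obtain W u where W1: "m1 \<le> W" and uu1: "\<forall>i<m1. u i = u1 i" and uon: "Bon Bf W u"
    and uold: "\<forall>h. Bexp Bf m1 u1 h \<longrightarrow> Bexp Bf W u h" and ue: "\<forall>a\<in>set (map e [0..<m]). Bexp Bf W u a"
    by blast
  have W0: "0 < W" using W1 m11 by simp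
  have u0: "u 0 = u1 0" using uu1 m11 by simp
  define nbc where "nbc = Bf x (u 0)"
  have xnbc: "x = nbc *\<^sub>C u 0" using Bm1 by (simp add: Bexp_def nbc_def u0)
  have Bxu: "Bf x (u i) = 0" if "0 < i" "i < W" for i
  proof -
    have "Bf x (u i) = nbc * Bf (u 0) (u i)" by (subst xnbc) (simp add: B_scaleC_left[OF sBf])
    thus ?thesis using uon that W0 by (simp add: Bon_def)
  qed
  have nbc_sq: "Re (Bf x x) = (cmod nbc)^2"
  proof -
    have "Bf x x = nbc * cnj nbc * Bf (u 0) (u 0)"
      by (subst (1 2) xnbc) (simp add: B_scaleC_left[OF sBf] B_scaleC_right[OF sBf] mult.assoc)
    also have "\<dots> = complex_of_real ((cmod nbc)^2)" using uon W0 complex_norm_square[of nbc] by (simp add: Bon_def)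
    finally show ?thesis by simp
  qed
  have nbc0: "nbc \<noteq> 0" using xnbc x0 by auto
  have nbc_low: "\<kappa> * (norm x)^2 \<le> (cmod nbc)^2" using Bf_low[of x] nbc_sq by simp
  have ueF: "Bexp Bf W u h" if "F h" for h
  proof (rule Bexp_trans[OF sBf sesq_cinner])
    show "Bexp cinner m e h" using that by (simp add: F_def inspan_Bexp)
    show "\<forall>i<m. Bexp Bf W u (e i)" using ue by simp
  qed

  define K where "K = N * W + 1"
  obtain ext where exte: "\<forall>i<m. ext i = e i" and exton': "Bon cinner (m + K) ext"
    using fresh_ext[OF inf eon'] by blast
  have exton: "onb_on {..<m+K} ext" using exton' by (simp add: Bon_cinner_onb)
  have ext_inner: "cinner (ext a) (ext b) = (if a = b then 1 else 0)" if "a < m + K" "b < m + K" for a b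
    using exton that by (simp add: onb_on_def)
  define f where "f l i = ext (m + (l - 1) * W + i)" for l i
  define g where "g = ext (m + N * W)"
  have fidx: "m + (l - 1) * W + i < m + N * W" if "1 \<le> l" "l \<le> N" "i < W" for l i
  proof -
    have "(l - 1) * W + i < (l - 1) * W + W" using that by simp
    also have "\<dots> = l * W" using that by (cases l) auto
    also have "\<dots> \<le> N * W" using that by simp
    finally show ?thesis by simp
  qed
  have fidx_inj: "m + (l - 1) * W + i = m + (l' - 1) * W + i' \<longleftrightarrow> l = l' \<and> i = i'"
    if "1 \<le> l" "1 \<le> l'" "i < W" "i' < W" for l l' i i'
  proof
    assume h: "m + (l - 1) * W + i = m + (l' - 1) * W + i'"
    hence "((l - 1) * W + i) div W = ((l' - 1) * W + i') div W" "((l - 1) * W + i) mod W = ((l' - 1) * W + i') mod W"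
      by simp_all
    hence "l - 1 = l' - 1" "i = i'" using that by simp_all
    thus "l = l' \<and> i = i'" using that by simp
  qed simp
  have ff: "cinner (f l i) (f l' i') = (if l = l' \<and> i = i' then 1 else 0)"
    if "1 \<le> l" "l \<le> N" "i < W" "1 \<le> l'" "l' \<le> N" "i' < W" for l i l' i'
    using ext_inner[of "m + (l - 1) * W + i" "m + (l' - 1) * W + i'"] fidx[of l i] fidx[of l' i'] that
      fidx_inj[of l l' i i'] by (simp add: f_def K_def)
  have fe: "cinner (f l i) (e j) = 0" if "1 \<le> l" "l \<le> N" "i < W" "j < m" for l i j
    using ext_inner[of "m + (l - 1) * W + i" j] fidx[of l i] that exte by (simp add: f_def K_def)
  have ef: "cinner (e j) (f l i) = 0" if "1 \<le> l" "l \<le> N" "i < W" "j < m" for l i j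
    using ext_inner[of j "m + (l - 1) * W + i"] fidx[of l i] that exte by (simp add: f_def K_def)
  have gg: "cinner g g = 1" using ext_inner[of "m + N * W" "m + N * W"] by (simp add: g_def K_def)
  have fg: "cinner (f l i) g = 0" if "1 \<le> l" "l \<le> N" "i < W" for l i
    using ext_inner[of "m + (l - 1) * W + i" "m + N * W"] fidx[of l i] that by (simp add: f_def g_def K_def)
  have gf: "cinner g (f l i) = 0" if "1 \<le> l" "l \<le> N" "i < W" for l i
    using ext_inner[of "m + N * W" "m + (l - 1) * W + i"] fidx[of l i] that by (simp add: f_def g_def K_def)
  have ge: "cinner g (e j) = 0" if "j < m" for j
    using ext_inner[of "m + N * W" j] that exte by (simp add: g_def K_def)
  have eg: "cinner (e j) g = 0" if "j < m" for j
    using ext_inner[of j "m + N * W"] that exte by (simp add: g_def K_def)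
  have Ff: "cinner h (f l i) = 0" if "F h" "1 \<le> l" "l \<le> N" "i < W" for h l i
    using that(1) unfolding F_def by (rule inspan_orth) (use ef that in auto)
  have fF: "cinner (f l i) h = 0" if "F h" "1 \<le> l" "l \<le> N" "i < W" for h l i
    using that(1) unfolding F_def by (rule inspan_orth') (use fe that in auto)
  have Fg: "cinner h g = 0" if "F h" for h
    using that unfolding F_def by (rule inspan_orth) (use eg in auto)
  have gF: "cinner g h = 0" if "F h" for h
    using that unfolding F_def by (rule inspan_orth') (use ge in auto)

  define Dc where "Dc l c = (\<Sum>i<W. c i *\<^sub>C f l i)" for l and c :: "nat \<Rightarrow> complex"
  have Dc_f: "cinner (Dc l c) (f l' i') = (if l = l' then c i' else 0)"
    if "1 \<le> l" "l \<le> N" "1 \<le> l'" "l' \<le> N" "i' < W" for l l' i' c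
  proof -
    have "cinner (Dc l c) (f l' i') = (\<Sum>i<W. c i * (if l = l' \<and> i = i' then 1 else 0))"
      unfolding Dc_def cinner_sum_left cinner_scaleC_left using that
      by (intro sum.cong refl) (simp add: ff)
    also have "\<dots> = (\<Sum>i<W. if i = i' then (if l = l' then c i else 0) else 0)"
      by (intro sum.cong refl) auto
    also have "\<dots> = (if l = l' then c i' else 0)" using that by simp
    finally show ?thesis .
  qed
  have Dc_Dc: "cinner (Dc l c) (Dc l' d) = (if l = l' then (\<Sum>i<W. c i * cnj (d i)) else 0)"
    if "1 \<le> l" "l \<le> N" "1 \<le> l'" "l' \<le> N" for l l' c d
  proof -
    have "cinner (Dc l c) (Dc l' d) = (\<Sum>i<W. cnj (d i) * cinner (Dc l c) (f l' i))"
      unfolding Dc_def[of l'] cinner_sum_right cinner_scaleC_right by simp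
    also have "\<dots> = (\<Sum>i<W. cnj (d i) * (if l = l' then c i else 0))"
      using that by (intro sum.cong refl) (simp add: Dc_f)
    also have "\<dots> = (if l = l' then (\<Sum>i<W. c i * cnj (d i)) else 0)"
      by (simp add: mult.commute)
    finally show ?thesis .
  qed
  have Dc_F: "cinner (Dc l c) h = 0" if "F h" "1 \<le> l" "l \<le> N" for l c h
    unfolding Dc_def cinner_sum_left cinner_scaleC_left using that by (simp add: fF)
  have F_Dc: "cinner h (Dc l c) = 0" if "F h" "1 \<le> l" "l \<le> N" for l c h
    unfolding Dc_def cinner_sum_right cinner_scaleC_right using that by (simp add: Ff)
  have Dc_g: "cinner (Dc l c) g = 0" if "1 \<le> l" "l \<le> N" for l c
    unfolding Dc_def cinner_sum_left cinner_scaleC_left using that by (simp add: fg)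
  have g_Dc: "cinner g (Dc l c) = 0" if "1 \<le> l" "l \<le> N" for l c
    unfolding Dc_def cinner_sum_right cinner_scaleC_right using that by (simp add: gf)
  have Dc_norm: "(norm (Dc l c))^2 = (\<Sum>i<W. (cmod (c i))^2)" if "1 \<le> l" "l \<le> N" for l c
  proof -
    have "(norm (Dc l c))^2 = Re (cinner (Dc l c) (Dc l c))" by (rule norm_sq_Re)
    also have "\<dots> = Re (\<Sum>i<W. c i * cnj (c i))" using that by (simp add: Dc_Dc)
    also have "\<dots> = (\<Sum>i<W. (cmod (c i))^2)"
      by (simp only: complex_norm_square[symmetric] Re_sum Re_complex_of_real)
    finally show ?thesis .
  qed
  define D where "D l h = Dc l (\<lambda>i. Bf h (u i))" for l h
  have D_add: "D l (a + b) = D l a + D l b" for l a b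
    by (simp add: D_def Dc_def B_add_left[OF sBf] scaleC_add_left sum.distrib)
  have D_scaleC: "D l (c *\<^sub>C a) = c *\<^sub>C D l a" for l a c
    by (simp add: D_def Dc_def B_scaleC_left[OF sBf] scaleC_sum_right scaleC_scaleC)
  define Phi where "Phi h = Cp h + D 1 h" for h
  have Phi_add: "Phi (a + b) = Phi a + Phi b" for a b by (simp add: Phi_def Cp_add D_add)
  have Phi_scaleC: "Phi (c *\<^sub>C a) = c *\<^sub>C Phi a" for a c
    by (simp add: Phi_def Cp_scaleC D_scaleC scaleC_add_right)
  have Phi_inner: "cinner (Phi a) (Phi b) = cinner a b" if "F a" "F b" for a b
  proof -
    have "cinner (Phi a) (Phi b) = cinner (Cp a) (Cp b) + cinner (D 1 a) (D 1 b)"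
      unfolding Phi_def cinner_add_left cinner_add_right D_def using N2
      by (simp add: Dc_F[OF Cp_F] F_Dc[OF Cp_F])
    also have "cinner (D 1 a) (D 1 b) = (\<Sum>i<W. Bf a (u i) * cnj (Bf b (u i)))"
      unfolding D_def using N2 by (simp add: Dc_Dc)
    also have "\<dots> = Bf a b" using Bexp_inner[OF sBf ueF[OF that(1)] ueF[OF that(2)] uon] by simp
    finally show ?thesis by (simp add: Bf_def)
  qed

  define zp where "zp = (1 / R^N) *\<^sub>R z"
  define eh where "eh = (1 / nbc) *\<^sub>C (zp - A N)"
  have zpF: "F zp" unfolding zp_def by (rule F_scaleR[OF zF])
  have ehF: "F eh" unfolding eh_def by (intro F_scaleC F_diff zpF A_F)
  have zpAN: "norm (zp - A N) \<le> \<kappa> * norm x / 2"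
  proof -
    have "norm (zp - A N) \<le> norm zp + norm (A N)" by (rule norm_triangle_ineq4)
    moreover have "norm zp = norm z / R^N" using R0 by (simp add: zp_def)
    moreover have "norm (A N) \<le> (1 - \<delta>)^N * norm x" by (rule A_norm)
    moreover have "(1 - \<delta>)^N * norm x \<le> \<kappa> * norm x / 4" using mult_right_mono[OF Nd norm_ge_zero[of x]] by simp
    ultimately show ?thesis using Nz by linarith
  qed
  have eh_norm: "(norm eh)^2 \<le> \<kappa> / 4"
  proof -
    have ne: "norm eh * cmod nbc = norm (zp - A N)"
      using nbc0 by (simp add: eh_def norm_scaleC norm_divide)
    have "(norm eh)^2 * (cmod nbc)^2 = (norm (zp - A N))^2" using ne by (metis power_mult_distrib)
    also have "\<dots> \<le> (\<kappa> * norm x / 2)^2" using zpAN by (intro power_mono) auto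
    also have "\<dots> = \<kappa> / 4 * (\<kappa> * (norm x)^2)" by (simp add: power2_eq_square)
    also have "\<dots> \<le> \<kappa> / 4 * (cmod nbc)^2" using nbc_low kpos by (intro mult_left_mono) auto
    finally have "(norm eh)^2 * (cmod nbc)^2 \<le> \<kappa> / 4 * (cmod nbc)^2" .
    moreover have "0 < (cmod nbc)^2" using nbc0 by simp
    ultimately show ?thesis by (meson mult_le_cancel_right_pos)
  qed
  define wc where "wc i = - cinner eh (Cp (u i))" for i
  define wv where "wv = Dc 1 wc"
  define Q where "Q = (\<Sum>i<W. (cmod (wc i))^2)"
  have wv_norm: "(norm wv)^2 = Q" unfolding wv_def Q_def using N2 by (intro Dc_norm) auto
  have Q0: "0 \<le> Q" unfolding Q_def by (intro sum_nonneg) auto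
  have Qle: "\<kappa> * Q \<le> (norm eh)^2"
  proof -
    define d where "d i = cinner eh (Cp (u i))" for i
    define \<xi> where "\<xi> = (\<Sum>i<W. d i *\<^sub>C u i)"
    have Qd: "Q = (\<Sum>i<W. (cmod (d i))^2)" by (simp add: Q_def wc_def d_def)
    have "Bf \<xi> \<xi> = (\<Sum>i<W. d i * cnj (d i))" unfolding \<xi>_def by (rule B_lincomb_lincomb[OF sBf uon])
    also have "\<dots> = complex_of_real Q" by (simp only: Qd of_real_sum complex_norm_square)
    finally have B\<xi>: "Bf \<xi> \<xi> = complex_of_real Q" .
    have "cinner eh (Cp \<xi>) = (\<Sum>i<W. cnj (d i) * d i)"
      by (simp add: \<xi>_def Cp_sum Cp_scaleC cinner_sum_right cinner_scaleC_right d_def)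
    also have "\<dots> = (\<Sum>i<W. d i * cnj (d i))" by (simp add: mult.commute)
    also have "\<dots> = complex_of_real Q" by (simp only: Qd of_real_sum complex_norm_square)
    finally have "cinner eh (Cp \<xi>) = complex_of_real Q" .
    hence "Q = cmod (cinner eh (Cp \<xi>))" using Q0 by simp
    also have "\<dots> \<le> norm eh * norm (Cp \<xi>)" by (rule cinner_cauchy_schwarz)
    also have "\<dots> \<le> norm eh * norm \<xi>"
    proof (intro mult_left_mono)
      have "(1 - \<delta>) * norm \<xi> \<le> 1 * norm \<xi>" by (rule mult_right_mono) (use d0 in auto)
      thus "norm (Cp \<xi>) \<le> norm \<xi>" using Cp_norm[of \<xi>] by linarith
    qed simp
    finally have Q1: "Q \<le> norm eh * norm \<xi>" .
    have Q2: "\<kappa> * (norm \<xi>)^2 \<le> Q" using Bf_low[of \<xi>] B\<xi> by simp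
    show ?thesis
    proof (cases "Q = 0")
      case True thus ?thesis by simp
    next
      case False
      hence Qp: "0 < Q" using Q0 by simp
      have QQ: "Q * Q \<le> (norm eh * norm \<xi>) * (norm eh * norm \<xi>)"
        by (rule mult_mono[OF Q1 Q1]) (use Qp in auto)
      have "\<kappa> * Q * Q \<le> \<kappa> * (norm eh * norm \<xi>)^2"
        using mult_left_mono[OF QQ, of \<kappa>] kpos by (simp add: power2_eq_square mult.assoc)
      also have "\<dots> = (norm eh)^2 * (\<kappa> * (norm \<xi>)^2)" by (simp add: power_mult_distrib)
      also have "\<dots> \<le> (norm eh)^2 * Q" using Q2 by (intro mult_left_mono) auto
      finally have "(\<kappa> * Q) * Q \<le> (norm eh)^2 * Q" by simp
      thus ?thesis using Qp by simp
    qed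
  qed
  have Q4: "Q \<le> 1/4"
  proof -
    have "\<kappa> * Q \<le> \<kappa> / 4" using Qle eh_norm by simp
    thus ?thesis using kpos by (simp add: field_simps)
  qed
  define s where "s = sqrt (1 - (norm eh)^2 - Q)"
  have s_sq: "s^2 = 1 - (norm eh)^2 - Q" unfolding s_def using eh_norm Q4 kle by simp
  define ost where "ost = eh + wv + s *\<^sub>R g"
  have wv_eh: "cinner wv eh = 0" unfolding wv_def using N2 by (intro Dc_F ehF) auto
  have eh_wv: "cinner eh wv = 0" unfolding wv_def using N2 by (intro F_Dc ehF) auto
  have wv_g: "cinner wv g = 0" unfolding wv_def using N2 by (intro Dc_g) auto
  have g_wv: "cinner g wv = 0" unfolding wv_def using N2 by (intro g_Dc) auto
  have ost_ost: "cinner ost ost = 1"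
  proof -
    have "cinner ost ost = cinner eh eh + cinner wv wv + complex_of_real (s * s) * cinner g g"
      by (simp add: ost_def cinner_add_left cinner_add_right cinner_scaleR_left cinner_scaleR_right
          wv_eh eh_wv wv_g g_wv Fg[OF ehF] gF[OF ehF])
    also have "\<dots> = complex_of_real ((norm eh)^2 + Q + s^2)"
      by (simp only: gg cinner_self_real[of eh] cinner_self_real[of wv] wv_norm mult_1_right of_real_add
          power2_eq_square[of s])
    also have "\<dots> = 1" using s_sq by simp
    finally show ?thesis .
  qed
  have Phi_ost: "cinner (Phi a) ost = 0" if "F a" for a
  proof -
    have "cinner (D 1 a) wv = (\<Sum>i<W. Bf a (u i) * cnj (wc i))" unfolding D_def wv_def using N2 by (simp add: Dc_Dc)
    also have "\<dots> = - (\<Sum>i<W. Bf a (u i) * cinner (Cp (u i)) eh)"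
    proof -
      have cw: "cnj (wc i) = - cinner (Cp (u i)) eh" for i by (simp add: wc_def cinner_conj[of "Cp (u i)" eh])
      show ?thesis by (simp add: cw sum_negf)
    qed
    also have "(\<Sum>i<W. Bf a (u i) * cinner (Cp (u i)) eh) = cinner (Cp (\<Sum>i<W. Bf a (u i) *\<^sub>C u i)) eh"
      by (simp add: Cp_sum Cp_scaleC cinner_sum_left cinner_scaleC_left)
    also have "(\<Sum>i<W. Bf a (u i) *\<^sub>C u i) = a" using ueF[OF that] by (simp add: Bexp_def)
    finally have "cinner (D 1 a) wv = - cinner (Cp a) eh" .
    moreover have "cinner (Cp a) wv = 0" unfolding wv_def using N2 by (intro F_Dc Cp_F) auto
    moreover have "cinner (D 1 a) eh = 0" unfolding D_def using N2 by (intro Dc_F ehF) auto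
    moreover have "cinner (D 1 a) g = 0" unfolding D_def using N2 by (intro Dc_g) auto
    moreover have "cinner (Cp a) g = 0" by (intro Fg Cp_F)
    ultimately show ?thesis
      by (simp add: Phi_def ost_def cinner_add_left cinner_add_right cinner_scaleR_right)
  qed
  have f_ost: "cinner (f l i) ost = 0" if "2 \<le> l" "l \<le> N" "i < W" for l i
  proof -
    have "cinner wv (f l i) = 0" unfolding wv_def using that N2 by (simp add: Dc_f)
    hence "cinner (f l i) wv = 0" using cinner_conj[of "f l i" wv] by simp
    thus ?thesis using that fF[OF ehF, of l i] fg[of l i]
      by (simp add: ost_def cinner_add_right cinner_scaleR_right)
  qed
  have Phi_f: "cinner (Phi a) (f l i) = 0" if "F a" "2 \<le> l" "l \<le> N" "i < W" for a l i
  proof -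
    have "cinner (D 1 a) (f l i) = 0" unfolding D_def using that N2 by (simp add: Dc_f)
    thus ?thesis using Ff[OF Cp_F, of l i a] that by (simp add: Phi_def cinner_add_left)
  qed
  have conj0: "cinner a b = 0 \<Longrightarrow> cinner b a = 0" for a b :: 'a using cinner_conj[of b a] by simp

  define I where "I = Sigma {..<N} (\<lambda>k. if k = 0 then {..<m} else {..<W})"
  have finI: "finite I" unfolding I_def by (intro finite_SigmaI) auto
  have memI: "(k, i) \<in> I \<longleftrightarrow> k < N \<and> i < (if k = 0 then m else W)" for k i by (simp add: I_def)
  define inp where "inp = (\<lambda>(k, i). if k = 0 then e i else f k i)"
  define outp where "outp = (\<lambda>(k, i). if k = 0 then Phi (e i) else if k = N - 1 \<and> i = 0 then ost else f (k + 1) i)"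
  have inp_on: "onb_on I inp"
    unfolding onb_on_def
  proof (intro ballI)
    fix p q assume p: "p \<in> I" and q: "q \<in> I"
    obtain k i where pk: "p = (k, i)" by (cases p)
    obtain k' j where qk: "q = (k', j)" by (cases q)
    have ki: "k < N" "i < (if k = 0 then m else W)" using p pk memI by auto
    have kj: "k' < N" "j < (if k' = 0 then m else W)" using q qk memI by auto
    show "cinner (inp p) (inp q) = (if p = q then 1 else 0)"
    proof (cases "k = 0")
      case True
      show ?thesis
      proof (cases "k' = 0")
        case True
        thus ?thesis using \<open>k = 0\<close> ki kj eon pk qk by (simp add: inp_def onb_on_def)
      next
        case False
        thus ?thesis using \<open>k = 0\<close> ki kj pk qk ef[of k' j i] by (simp add: inp_def)
      qed
    next
      case False
      show ?thesis
      proof (cases "k' = 0")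
        case True
        thus ?thesis using \<open>k \<noteq> 0\<close> ki kj pk qk fe[of k i j] by (simp add: inp_def)
      next
        case False
        thus ?thesis using \<open>k \<noteq> 0\<close> ki kj pk qk ff[of k i k' j] by (simp add: inp_def)
      qed
    qed
  qed
  have outp_on: "onb_on I outp"
    unfolding onb_on_def
  proof (intro ballI)
    fix p q assume p: "p \<in> I" and q: "q \<in> I"
    obtain k i where pk: "p = (k, i)" by (cases p)
    obtain k' j where qk: "q = (k', j)" by (cases q)
    have ki: "k < N" "i < (if k = 0 then m else W)" using p pk memI by auto
    have kj: "k' < N" "j < (if k' = 0 then m else W)" using q qk memI by auto
    consider (A) "k = 0" | (O) "k = N - 1" "i = 0" | (P) "k \<noteq> 0" "\<not> (k = N - 1 \<and> i = 0)" using N2 by auto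
    note cp = this
    consider (A) "k' = 0" | (O) "k' = N - 1" "j = 0" | (P) "k' \<noteq> 0" "\<not> (k' = N - 1 \<and> j = 0)" using N2 by auto
    note cq = this
    have NO: "N - 1 \<noteq> 0" using N2 by simp
    show "cinner (outp p) (outp q) = (if p = q then 1 else 0)"
    proof (cases rule: cp)
      case A
      show ?thesis
      proof (cases rule: cq)
        case A' : A
        thus ?thesis using A ki kj pk qk eon Phi_inner[OF eF eF, of i j] by (simp add: outp_def onb_on_def)
      next
        case O' : O
        thus ?thesis using A ki kj pk qk NO Phi_ost[OF eF, of i] by (auto simp: outp_def)
      next
        case P' : P
        thus ?thesis using A ki kj pk qk Phi_f[OF eF, of i "k' + 1" j] by (auto simp: outp_def)
      qed
    next
      case O
      show ?thesis
      proof (cases rule: cq)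
        case A' : A
        thus ?thesis using O ki kj pk qk NO conj0[OF Phi_ost[OF eF, of j]] by (auto simp: outp_def)
      next
        case O' : O
        thus ?thesis using O ki kj pk qk NO ost_ost by (auto simp: outp_def)
      next
        case P' : P
        thus ?thesis using O ki kj pk qk NO conj0[OF f_ost[of "k' + 1" j]] by (auto simp: outp_def)
      qed
    next
      case P
      show ?thesis
      proof (cases rule: cq)
        case A' : A
        thus ?thesis using P ki kj pk qk conj0[OF Phi_f[OF eF, of j "k + 1" i]] by (auto simp: outp_def)
      next
        case O' : O
        thus ?thesis using P ki kj pk qk NO f_ost[of "k + 1" i] by (auto simp: outp_def)
      next
        case P' : P
        thus ?thesis using P ki kj pk qk ff[of "k + 1" i "k' + 1" j] by (auto simp: outp_def)
      qed
    qed
  qed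

  define V where "V = opr I inp outp"
  have V_inp: "V (inp p) = outp p" if "p \<in> I" for p unfolding V_def by (rule opr_basis[OF finI inp_on that])
  have V_e: "V (e i) = Phi (e i)" if "i < m" for i
    using V_inp[of "(0, i)"] that N2 by (simp add: memI inp_def outp_def)
  have Phi_zero: "Phi 0 = 0" using Phi_scaleC[of 0 0] by simp
  have Phi_sum: "Phi (\<Sum>i\<in>J. h i) = (\<Sum>i\<in>J. Phi (h i))" for J h
  proof (induction J rule: infinite_finite_induct)
    case (infinite A) thus ?case by (simp add: Phi_zero)
  next
    case empty thus ?case by (simp add: Phi_zero)
  next
    case (insert j J) thus ?case by (simp add: Phi_add)
  qed
  have V_F: "V h = Phi h" if "F h" for h
  proof -
    have h: "h = (\<Sum>i<m. cinner h (e i) *\<^sub>C e i)" using that by (simp add: F_def inspan_def opr_def)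
    have "V h = (\<Sum>i<m. cinner h (e i) *\<^sub>C V (e i))"
      by (subst h) (simp add: V_def opr_sum opr_scaleC)
    also have "\<dots> = (\<Sum>i<m. cinner h (e i) *\<^sub>C Phi (e i))" by (intro sum.cong refl) (simp add: V_e)
    also have "\<dots> = Phi h" by (subst (2) h) (simp add: Phi_sum Phi_scaleC)
    finally show ?thesis .
  qed
  have V_f: "V (f l i) = (if l = N - 1 \<and> i = 0 then ost else f (l + 1) i)"
    if "1 \<le> l" "l \<le> N - 1" "i < W" for l i
    using V_inp[of "(l, i)"] that N2 by (simp add: memI inp_def outp_def)
  have V_Dc: "V (Dc l c) = Dc (l + 1) c" if "1 \<le> l" "l < N - 1" for l c
  proof -
    have "V (Dc l c) = (\<Sum>i<W. c i *\<^sub>C V (f l i))" by (simp add: V_def Dc_def opr_sum opr_scaleC)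
    also have "\<dots> = Dc (l + 1) c" unfolding Dc_def using that by (intro sum.cong refl) (simp add: V_f)
    finally show ?thesis .
  qed
  have V_Dlast: "V (D (N - 1) x) = nbc *\<^sub>C ost"
  proof -
    have "V (D (N - 1) x) = (\<Sum>i<W. Bf x (u i) *\<^sub>C V (f (N - 1) i))"
      by (simp add: V_def D_def Dc_def opr_sum opr_scaleC)
    also have "\<dots> = (\<Sum>i<W. if i = 0 then nbc *\<^sub>C ost else 0)"
    proof (intro sum.cong refl)
      fix i assume "i \<in> {..<W}"
      thus "Bf x (u i) *\<^sub>C V (f (N - 1) i) = (if i = 0 then nbc *\<^sub>C ost else 0)"
        using N2 Bxu[of i] by (simp add: V_f nbc_def)
    qed
    also have "\<dots> = nbc *\<^sub>C ost" using W0 by simp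
    finally show ?thesis .
  qed
  define orb where "orb k = A k + (\<Sum>l\<in>{1..k}. D l (A (k - l)))" for k
  have orb_Suc: "V (orb k) = orb (Suc k)" if "Suc k \<le> N - 1" for k
  proof -
    have "V (orb k) = V (A k) + (\<Sum>l\<in>{1..k}. V (D l (A (k - l))))"
      by (simp add: orb_def V_def opr_add opr_sum)
    also have "V (A k) = A (Suc k) + D 1 (A k)" by (simp add: V_F[OF A_F] Phi_def A_Suc)
    also have "(\<Sum>l\<in>{1..k}. V (D l (A (k - l)))) = (\<Sum>l\<in>{1..k}. D (Suc l) (A (k - l)))"
      using that by (intro sum.cong refl) (simp add: D_def V_Dc)
    also have "\<dots> = (\<Sum>l\<in>{Suc 1..Suc k}. D l (A (Suc k - l)))"
      by (subst sum.shift_bounds_cl_Suc_ivl) simp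
    also have "A (Suc k) + D 1 (A k) + \<dots> = A (Suc k) + (D 1 (A (Suc k - 1)) + (\<Sum>l\<in>{Suc 1..Suc k}. D l (A (Suc k - l))))"
      by (simp add: add.assoc)
    also have "D 1 (A (Suc k - 1)) + (\<Sum>l\<in>{Suc 1..Suc k}. D l (A (Suc k - l))) = (\<Sum>l\<in>{1..Suc k}. D l (A (Suc k - l)))"
      by (subst sum.atLeast_Suc_atMost[of 1 "Suc k"]) simp_all
    finally show ?thesis by (simp add: orb_def)
  qed
  have orb_eq: "(V ^^ k) x = orb k" if "k \<le> N - 1" for k
    using that
  proof (induction k)
    case 0 thus ?case by (simp add: orb_def A_def)
  next
    case (Suc k) thus ?case using orb_Suc[of k] by simp
  qed
  have insF: "inspan I inp h" if "F h" for h
  proof -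
    have h: "h = (\<Sum>i<m. cinner h (e i) *\<^sub>C inp (0, i))" using that by (simp add: F_def inspan_def opr_def inp_def)
    show ?thesis
      by (subst h, intro inspan_sum inspan_scaleC inspan_basis[OF finI inp_on]) (use N2 in \<open>auto simp: memI\<close>)
  qed
  have insD: "inspan I inp (D l h)" if "1 \<le> l" "l \<le> N - 1" for l h
  proof -
    have h: "D l h = (\<Sum>i<W. Bf h (u i) *\<^sub>C inp (l, i))" using that by (simp add: D_def Dc_def inp_def)
    show ?thesis
      by (subst h, intro inspan_sum inspan_scaleC inspan_basis[OF finI inp_on]) (use that in \<open>auto simp: memI\<close>)
  qed
  have orb_ins: "inspan I inp (orb k)" if "k \<le> N - 1" for k
    unfolding orb_def using that by (intro inspan_add insF A_F inspan_sum insD) auto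
  have orb_norm: "norm (V (orb k)) = norm (orb k)" if "k \<le> N - 1" for k
    unfolding V_def using finI inp_on outp_on orb_ins[OF that] by (intro norm_opr_eq) (auto simp: inspan_def opr_def)
  have final: "cinner ((V ^^ N) x) y = cinner zp y" if "F y" for y
  proof -
    have NN: "N = Suc (N - 1)" using N2 by simp
    have "(V ^^ N) x = V (orb (N - 1))" by (subst NN) (simp add: orb_eq)
    also have "\<dots> = V (A (N - 1)) + (\<Sum>l\<in>{1..N - 1}. V (D l (A (N - 1 - l))))"
      by (simp add: orb_def V_def opr_add opr_sum)
    finally have VN: "(V ^^ N) x = V (A (N - 1)) + (\<Sum>l\<in>{1..N - 1}. V (D l (A (N - 1 - l))))" .
    have c1: "cinner (V (A (N - 1))) y = cinner (A N) y"
    proof -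
      have "V (A (N - 1)) = A N + D 1 (A (N - 1))" using NN by (metis V_F A_F Phi_def A_Suc)
      thus ?thesis using that N2 by (simp add: cinner_add_left D_def Dc_F)
    qed
    have NN2: "N - 1 = Suc (N - 2)" using N2 by simp
    have c2: "(\<Sum>l\<in>{1..N - 1}. cinner (V (D l (A (N - 1 - l)))) y) = nbc * cinner eh y"
    proof -
      have "(\<Sum>l\<in>{1..N - 1}. cinner (V (D l (A (N - 1 - l)))) y)
          = (\<Sum>l\<in>{1..N - 2}. cinner (V (D l (A (N - 1 - l)))) y) + cinner (V (D (N - 1) (A 0))) y"
        by (subst NN2, subst sum.cl_ivl_Suc) (use N2 in \<open>simp add: NN2[symmetric]\<close>)
      also have "(\<Sum>l\<in>{1..N - 2}. cinner (V (D l (A (N - 1 - l)))) y) = 0"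
      proof (intro sum.neutral ballI)
        fix l assume l: "l \<in> {1..N - 2}"
        hence "1 \<le> l" "l < N - 1" by auto
        hence "V (D l (A (N - 1 - l))) = Dc (l + 1) (\<lambda>i. Bf (A (N - 1 - l)) (u i))"
          unfolding D_def by (rule V_Dc)
        moreover have "Suc l \<le> N" using l N2 by auto
        ultimately show "cinner (V (D l (A (N - 1 - l)))) y = 0" using Dc_F[OF that, of "Suc l"] by simp
      qed
      also have "cinner (V (D (N - 1) (A 0))) y = nbc * cinner ost y"
        using V_Dlast by (simp add: A_def cinner_scaleC_left)
      also have "cinner ost y = cinner eh y"
      proof -
        have "cinner wv y = 0" unfolding wv_def using that N2 by (intro Dc_F) auto
        thus ?thesis using gF[OF that] by (simp add: ost_def cinner_add_left cinner_scaleR_left)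
      qed
      finally show ?thesis by simp
    qed
    have "cinner ((V ^^ N) x) y = cinner (A N) y + nbc * cinner eh y"
      using c1 c2 by (simp add: VN cinner_add_left cinner_sum_left)
    also have "\<dots> = cinner (A N + nbc *\<^sub>C eh) y" by (simp add: cinner_add_left cinner_scaleC_left)
    also have "A N + nbc *\<^sub>C eh = zp" using nbc0 by (simp add: eh_def scaleC_scaleC)
    finally show ?thesis .
  qed

  define Sf where "Sf h = R *\<^sub>R V h" for h
  have V_add: "V (a + b) = V a + V b" for a b by (simp add: V_def opr_add)
  have V_scaleR: "V (r *\<^sub>R a) = r *\<^sub>R V a" for r a by (simp add: V_def opr_scaleR)
  have V_scaleC: "V (c *\<^sub>C a) = c *\<^sub>C V a" for c a by (simp add: V_def opr_scaleC)
  have V_norm: "norm (V h) \<le> norm h" for h unfolding V_def by (rule norm_opr_le[OF finI inp_on outp_on])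
  have Sf_norm: "norm (Sf h) \<le> R * norm h" for h
    using V_norm[of h] R0 by (simp add: Sf_def mult_left_mono)
  have blS: "bounded_linear Sf"
  proof (rule bounded_linear_intro[where K=R])
    fix a b :: 'a and r :: real
    show "Sf (a + b) = Sf a + Sf b" by (simp add: Sf_def V_add scaleR_add_right)
    show "Sf (r *\<^sub>R a) = r *\<^sub>R Sf a" by (simp add: Sf_def V_scaleR)
    show "norm (Sf a) \<le> norm a * R" using Sf_norm[of a] by (simp add: mult.commute)
  qed
  define S where "S = Blinfun Sf"
  have Sapp: "blinfun_apply S = Sf" unfolding S_def by (rule bounded_linear_Blinfun_apply[OF blS])
  have clS: "clinear (blinfun_apply S)"
    by (simp add: Sapp clinear_def Sf_def V_add V_scaleC scaleR_add_right scaleR_scaleC_commute)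
  have frS: "finite_rank (blinfun_apply S)"
  proof -
    have eq: "Sf = opr I inp (\<lambda>p. R *\<^sub>R outp p)"
      by (rule ext) (simp add: Sf_def V_def opr_def scaleR_sum_right scaleR_scaleC_commute)
    have "inj_on (\<lambda>p. R *\<^sub>R outp p) I"
      using onb_on_inj[OF outp_on] R0 by (auto simp: inj_on_def)
    hence "range Sf \<subseteq> cspan ((\<lambda>p. R *\<^sub>R outp p) ` I)" unfolding eq by (rule opr_range'[OF finI])
    thus ?thesis unfolding finite_rank_def Sapp using finI by blast
  qed
  have nS: "norm S \<le> R" using R0 Sf_norm by (intro norm_blinfun_bound) (auto simp: Sapp)
  have Spow: "(Sf ^^ k) h = R^k *\<^sub>R (V ^^ k) h" for k h
    by (induction k) (simp_all add: Sf_def V_scaleR)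
  have weak: "cmod (cinner (blinfun_apply (S - T) (xs j)) (ys j)) < \<epsilon>" if "j < n" for j
  proof -
    have "cinner (blinfun_apply (S - T) (xs j)) (ys j) = cinner (R *\<^sub>R V (xs j) - Tf (xs j)) (ys j)"
      by (simp add: blinfun.diff_left Sapp Sf_def Tf_def)
    also have "\<dots> = complex_of_real R * cinner (Phi (xs j)) (ys j) - cinner (Tf (xs j)) (ys j)"
      by (simp add: cinner_diff_left cinner_scaleR_left V_F[OF xsF[OF that]])
    also have "cinner (Phi (xs j)) (ys j) = complex_of_real ((1 - \<delta>) / R) * cinner (Tf (xs j)) (ys j)"
      using ysF[OF that] N2 by (simp add: Phi_def cinner_add_left Cp_inner D_def Dc_F)
    also have "complex_of_real R * (complex_of_real ((1 - \<delta>) / R) * cinner (Tf (xs j)) (ys j)) - cinner (Tf (xs j)) (ys j)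
        = - complex_of_real \<delta> * cinner (Tf (xs j)) (ys j)"
    proof -
      have rr: "complex_of_real R * complex_of_real ((1 - \<delta>) / R) = complex_of_real (1 - \<delta>)"
        unfolding of_real_mult[symmetric] using R0 by simp
      have "complex_of_real R * (complex_of_real ((1 - \<delta>) / R) * cinner (Tf (xs j)) (ys j))
          = complex_of_real (1 - \<delta>) * cinner (Tf (xs j)) (ys j)" by (simp only: mult.assoc[symmetric] rr)
      thus ?thesis by (simp add: algebra_simps)
    qed
    finally have eq: "cinner (blinfun_apply (S - T) (xs j)) (ys j) = - complex_of_real \<delta> * cinner (Tf (xs j)) (ys j)" .
    have "cmod (cinner (Tf (xs j)) (ys j)) \<le> norm (Tf (xs j)) * norm (ys j)" by (rule cinner_cauchy_schwarz)
    also have "\<dots> \<le> R" using Tn[of "xs j"] nxy that by simp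
    finally have "cmod (cinner (blinfun_apply (S - T) (xs j)) (ys j)) \<le> \<delta> * R"
      using d0 by (simp add: eq norm_mult mult_left_mono)
    thus ?thesis using dR by simp
  qed
  have hit: "cinner (z - (blinfun_apply S ^^ N) x) (ys j) = 0" if "j < n" for j
  proof -
    have "cinner (z - (blinfun_apply S ^^ N) x) (ys j) = cinner z (ys j) - complex_of_real (R^N) * cinner zp (ys j)"
      by (simp add: Sapp Spow cinner_diff_left cinner_scaleR_left final[OF ysF[OF that]])
    also have "\<dots> = 0" using R0 by (simp add: zp_def cinner_scaleR_left)
    finally show ?thesis .
  qed
  have growth: "norm ((blinfun_apply S ^^ (l + 1)) x) = R * norm ((blinfun_apply S ^^ l) x)" if "l < N" for l
  proof -
    have "norm ((V ^^ (l + 1)) x) = norm ((V ^^ l) x)"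
      using orb_norm[of l] orb_eq[of l] that by simp
    moreover have a: "norm ((Sf ^^ (l + 1)) x) = R^(l+1) * norm ((V ^^ (l+1)) x)" unfolding Spow using R0 by simp
    moreover have b: "norm ((Sf ^^ l) x) = R^l * norm ((V ^^ l) x)" unfolding Spow using R0 by simp
    ultimately show ?thesis unfolding Sapp a b by simp
  qed
  show ?thesis using clS frS nS weak hit growth by blast
qed


lemma Nexists:
  fixes R b c d q :: real
  assumes "R > 1" "0 \<le> q" "q < 1" "c > 0" "d > 0"
  shows "\<exists>N. 2 \<le> N \<and> b / R^N \<le> c \<and> q^N \<le> d"
proof -
  have L1: "(\<lambda>N. b * (inverse R)^N) \<longlonglongrightarrow> b * 0"
    using assms by (intro tendsto_mult tendsto_const LIMSEQ_realpow_zero) (auto simp: inverse_less_1_iff)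
  have L2: "(\<lambda>N. q^N) \<longlonglongrightarrow> 0" using assms by (intro LIMSEQ_realpow_zero) auto
  have "eventually (\<lambda>N. b * (inverse R)^N < c) sequentially" using order_tendstoD(2)[OF L1] assms by simp
  moreover have "eventually (\<lambda>N. q^N < d) sequentially" using order_tendstoD(2)[OF L2] assms by simp
  moreover have "eventually (\<lambda>N. 2 \<le> N) sequentially" by (rule eventually_ge_at_top)
  ultimately have "eventually (\<lambda>N. 2 \<le> N \<and> b * (inverse R)^N < c \<and> q^N < d) sequentially"
    by eventually_elim auto
  then obtain N where "2 \<le> N" "b * (inverse R)^N < c" "q^N < d" by (auto simp: eventually_sequentially)
  thus ?thesis by (intro exI[of _ N]) (auto simp: divide_inverse power_inverse)
qed

theorem lemma8:
  assumes separable: "\<exists>D::'a::{complex_inner, complete_space} set. countable D \<and> closure D = UNIV"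
    and infinite_dim: "\<not> (\<exists>B::'a set. finite B \<and> cspan B = UNIV)"
  shows "\<exists>Nf :: real \<Rightarrow> real \<Rightarrow> real \<Rightarrow> real \<Rightarrow> nat.
    \<forall>(n::nat) (xs::nat \<Rightarrow> 'a) (ys::nat \<Rightarrow> 'a) (R::real) (T::'a \<Rightarrow>\<^sub>L 'a) (x::'a) (z::'a) (\<epsilon>::real).
      (\<forall>j<n. norm (xs j) = 1 \<and> norm (ys j) = 1) \<and> R > 1 \<and>
      clinear (blinfun_apply T) \<and> norm T \<le> R \<and> x \<noteq> 0 \<and> \<epsilon> > 0 \<longrightarrow>
      (let N = Nf R \<epsilon> (norm x) (norm z) in
       \<exists>S::'a \<Rightarrow>\<^sub>L 'a. clinear (blinfun_apply S) \<and> finite_rank (blinfun_apply S) \<and> norm S \<le> R \<and>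
         (\<forall>j<n. cmod (cinner (blinfun_apply (S - T) (xs j)) (ys j)) < \<epsilon> \<and>
                cinner (z - (blinfun_apply S ^^ N) x) (ys j) = 0) \<and>
         (\<forall>l<N. norm ((blinfun_apply S ^^ (l + 1)) x) = R * norm ((blinfun_apply S ^^ l) x)))"
proof -
  define dl where "dl R \<epsilon> = min (1/2) (\<epsilon> / (2 * R))" for R \<epsilon> :: real
  define kp where "kp R \<epsilon> = 1 - (1 - dl R \<epsilon>)^2" for R \<epsilon>
  define Nf where "Nf R \<epsilon> a b = (SOME N. 2 \<le> N \<and> b / R^N \<le> kp R \<epsilon> * a / 4 \<and> (1 - dl R \<epsilon>)^N \<le> kp R \<epsilon> / 4)"
    for R \<epsilon> a b :: real
  show ?thesis
  proof (rule exI[of _ Nf], intro allI impI)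
    fix n :: nat and xs ys :: "nat \<Rightarrow> 'a" and R :: real and T :: "'a \<Rightarrow>\<^sub>L 'a" and x z :: 'a and \<epsilon> :: real
    assume H: "(\<forall>j<n. norm (xs j) = 1 \<and> norm (ys j) = 1) \<and> R > 1 \<and>
      clinear (blinfun_apply T) \<and> norm T \<le> R \<and> x \<noteq> 0 \<and> \<epsilon> > 0"
    hence nxy: "\<forall>j<n. norm (xs j) = 1 \<and> norm (ys j) = 1" and R1: "R > 1" and lin: "clinear (blinfun_apply T)"
      and nT: "norm T \<le> R" and x0: "x \<noteq> 0" and e0: "\<epsilon> > 0" by auto
    define \<delta> where "\<delta> = dl R \<epsilon>"
    define \<kappa> where "\<kappa> = kp R \<epsilon>"
    have d0: "0 < \<delta>" using R1 e0 by (simp add: \<delta>_def dl_def)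
    have d1: "\<delta> \<le> 1/2" by (simp add: \<delta>_def dl_def)
    have dR: "\<delta> * R < \<epsilon>"
    proof -
      have "\<delta> \<le> \<epsilon> / (2 * R)" by (simp add: \<delta>_def dl_def)
      hence "\<delta> * R \<le> \<epsilon> / (2 * R) * R" using R1 by (intro mult_right_mono) auto
      also have "\<dots> = \<epsilon> / 2" using R1 by simp
      finally show ?thesis using e0 by simp
    qed
    have kap: "\<kappa> = 1 - (1 - \<delta>)^2" by (simp add: \<kappa>_def kp_def \<delta>_def)
    have kpos: "0 < \<kappa>"
    proof -
      have "\<kappa> = \<delta> * (2 - \<delta>)" using kap by (simp add: power2_eq_square algebra_simps)
      thus ?thesis using d0 d1 by simp
    qed
    have "\<exists>N. 2 \<le> N \<and> norm z / R^N \<le> \<kappa> * norm x / 4 \<and> (1 - \<delta>)^N \<le> \<kappa> / 4"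
      using R1 d0 d1 kpos x0 by (intro Nexists) auto
    hence NP: "2 \<le> Nf R \<epsilon> (norm x) (norm z) \<and> norm z / R^(Nf R \<epsilon> (norm x) (norm z)) \<le> \<kappa> * norm x / 4
        \<and> (1 - \<delta>)^(Nf R \<epsilon> (norm x) (norm z)) \<le> \<kappa> / 4"
      unfolding Nf_def \<kappa>_def \<delta>_def by (rule someI_ex)
    have "\<exists>S::'a \<Rightarrow>\<^sub>L 'a. clinear (blinfun_apply S) \<and> finite_rank (blinfun_apply S) \<and> norm S \<le> R \<and>
         (\<forall>j<n. cmod (cinner (blinfun_apply (S - T) (xs j)) (ys j)) < \<epsilon> \<and>
                cinner (z - (blinfun_apply S ^^ Nf R \<epsilon> (norm x) (norm z)) x) (ys j) = 0) \<and>
         (\<forall>l<Nf R \<epsilon> (norm x) (norm z). norm ((blinfun_apply S ^^ (l + 1)) x) = R * norm ((blinfun_apply S ^^ l) x))"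
      using NP by (intro main_constr[OF infinite_dim nxy R1 lin nT x0 d0 d1 dR kap]) auto
    thus "let N = Nf R \<epsilon> (norm x) (norm z) in
       \<exists>S::'a \<Rightarrow>\<^sub>L 'a. clinear (blinfun_apply S) \<and> finite_rank (blinfun_apply S) \<and> norm S \<le> R \<and>
         (\<forall>j<n. cmod (cinner (blinfun_apply (S - T) (xs j)) (ys j)) < \<epsilon> \<and>
                cinner (z - (blinfun_apply S ^^ N) x) (ys j) = 0) \<and>
         (\<forall>l<N. norm ((blinfun_apply S ^^ (l + 1)) x) = R * norm ((blinfun_apply S ^^ l) x))"
      by (simp add: Let_def)
  qed
qed

end
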